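(* Let $f\colon A\to B$, $a\colon A\to A$ and $b\colon B\to B$ be morphisms in a pre-Hilbert $*$-category with $a\succ 0$ and $b\succ 0$. Then \[ f^*b^{-1}f\leq a \iff fa^{-1}f^*\leq b \qquad\text{and}\qquad f^*b^{-1}f\prec a \iff fa^{-1}f^*\prec b. \]
   Context: A $*$-category is a category with a choice of $f^*\colon Y\to X$ for each $f\colon X\to Y$ such that $1^*=1$, $(gf)^*=f^*g^*$, $(f^* )^*=f$. A pre-Hilbert $*$-category is a $*$-category with (R1) a zero object, (R2) orthonormal biproducts of all pairs of objects (biproducts $(X,s_1,r_1,s_2,r_2)$ with $r_k=s_k^*$), (R3) an isometric kernel (kernel $m$ with $m^*m=1$) for every morphism, and (R4) every diagonal $\Delta\colon X\to X\oplus X$ a kernel of some morphism; such a category is additive. For Hermitian endomorphisms ($c^*=c$) $c,d$ of an object $A$, $c\leq d$ means $d-c=y^*y$ for some object $Y$ and $y\colon A\to Y$; $c\prec d$ (also written $d\succ c$) means $c\leq d$ and $d-c$ is invertible. *)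

theory Defs
  imports Main
begin

text \<open>A (small-or-large) category presented by a set of objects, a set of arrows,
  domain/codomain maps, a (partial) composition, identities, and a dagger (star).
  Cmp C g f is the composite g after f.\<close>

record ('o, 'm) starcat =
  Ob   :: "'o set"
  Ar   :: "'m set"
  Dom  :: "'m \<Rightarrow> 'o"
  Cod  :: "'m \<Rightarrow> 'o"
  Cmp  :: "'m \<Rightarrow> 'm \<Rightarrow> 'm"
  Idm  :: "'o \<Rightarrow> 'm"
  Star :: "'m \<Rightarrow> 'm"

definition hom :: "('o, 'm) starcat \<Rightarrow> 'o \<Rightarrow> 'o \<Rightarrow> 'm set" where
  "hom C X Y = {f \<in> Ar C. Dom C f = X \<and> Cod C f = Y}"

definition category :: "('o, 'm) starcat \<Rightarrow> bool" where
  "category C \<longleftrightarrow>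
     (\<forall>f \<in> Ar C. Dom C f \<in> Ob C \<and> Cod C f \<in> Ob C) \<and>
     (\<forall>X \<in> Ob C. Idm C X \<in> hom C X X) \<and>
     (\<forall>X \<in> Ob C. \<forall>Y \<in> Ob C. \<forall>Z \<in> Ob C. \<forall>f \<in> hom C X Y. \<forall>g \<in> hom C Y Z.
        Cmp C g f \<in> hom C X Z) \<and>
     (\<forall>W \<in> Ob C. \<forall>X \<in> Ob C. \<forall>Y \<in> Ob C. \<forall>Z \<in> Ob C.
        \<forall>f \<in> hom C W X. \<forall>g \<in> hom C X Y. \<forall>h \<in> hom C Y Z.
        Cmp C h (Cmp C g f) = Cmp C (Cmp C h g) f) \<and>
     (\<forall>X \<in> Ob C. \<forall>Y \<in> Ob C. \<forall>f \<in> hom C X Y.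
        Cmp C f (Idm C X) = f \<and> Cmp C (Idm C Y) f = f)"

definition star_category :: "('o, 'm) starcat \<Rightarrow> bool" where
  "star_category C \<longleftrightarrow> category C \<and>
     (\<forall>X \<in> Ob C. \<forall>Y \<in> Ob C. \<forall>f \<in> hom C X Y. Star C f \<in> hom C Y X) \<and>
     (\<forall>X \<in> Ob C. Star C (Idm C X) = Idm C X) \<and>
     (\<forall>X \<in> Ob C. \<forall>Y \<in> Ob C. \<forall>Z \<in> Ob C. \<forall>f \<in> hom C X Y. \<forall>g \<in> hom C Y Z.
        Star C (Cmp C g f) = Cmp C (Star C f) (Star C g)) \<and>
     (\<forall>f \<in> Ar C. Star C (Star C f) = f)"

definition zero_object :: "('o, 'm) starcat \<Rightarrow> 'o \<Rightarrow> bool" where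
  "zero_object C Z \<longleftrightarrow> Z \<in> Ob C \<and>
     (\<forall>X \<in> Ob C. (\<exists>!f. f \<in> hom C X Z) \<and> (\<exists>!f. f \<in> hom C Z X))"

definition zero_mor :: "('o, 'm) starcat \<Rightarrow> 'o \<Rightarrow> 'o \<Rightarrow> 'm" where
  "zero_mor C X Y = (THE h. \<exists>Z u v. zero_object C Z \<and> u \<in> hom C X Z \<and> v \<in> hom C Z Y
                                  \<and> h = Cmp C v u)"

definition is_biproduct ::
  "('o, 'm) starcat \<Rightarrow> 'o \<Rightarrow> 'o \<Rightarrow> 'o \<Rightarrow> 'm \<Rightarrow> 'm \<Rightarrow> 'm \<Rightarrow> 'm \<Rightarrow> bool" where
  "is_biproduct C X1 X2 P s1 r1 s2 r2 \<longleftrightarrow>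
     P \<in> Ob C \<and> s1 \<in> hom C X1 P \<and> r1 \<in> hom C P X1 \<and> s2 \<in> hom C X2 P \<and> r2 \<in> hom C P X2 \<and>
     Cmp C r1 s1 = Idm C X1 \<and> Cmp C r2 s2 = Idm C X2 \<and>
     Cmp C r2 s1 = zero_mor C X1 X2 \<and> Cmp C r1 s2 = zero_mor C X2 X1 \<and>
     (\<forall>W \<in> Ob C. \<forall>g1 \<in> hom C W X1. \<forall>g2 \<in> hom C W X2.
        \<exists>!m. m \<in> hom C W P \<and> Cmp C r1 m = g1 \<and> Cmp C r2 m = g2) \<and>
     (\<forall>W \<in> Ob C. \<forall>g1 \<in> hom C X1 W. \<forall>g2 \<in> hom C X2 W.
        \<exists>!m. m \<in> hom C P W \<and> Cmp C m s1 = g1 \<and> Cmp C m s2 = g2)"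

definition is_orthonormal_biproduct ::
  "('o, 'm) starcat \<Rightarrow> 'o \<Rightarrow> 'o \<Rightarrow> 'o \<Rightarrow> 'm \<Rightarrow> 'm \<Rightarrow> 'm \<Rightarrow> 'm \<Rightarrow> bool" where
  "is_orthonormal_biproduct C X1 X2 P s1 r1 s2 r2 \<longleftrightarrow>
     is_biproduct C X1 X2 P s1 r1 s2 r2 \<and> r1 = Star C s1 \<and> r2 = Star C s2"

definition is_kernel :: "('o, 'm) starcat \<Rightarrow> 'm \<Rightarrow> 'm \<Rightarrow> bool" where
  "is_kernel C f m \<longleftrightarrow> f \<in> Ar C \<and> m \<in> Ar C \<and> Cod C m = Dom C f \<and>
     Cmp C f m = zero_mor C (Dom C m) (Cod C f) \<and>
     (\<forall>X \<in> Ob C. \<forall>g \<in> hom C X (Dom C f).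
        Cmp C f g = zero_mor C X (Cod C f) \<longrightarrow> (\<exists>!h. h \<in> hom C X (Dom C m) \<and> Cmp C m h = g))"

definition pre_hilbert :: "('o, 'm) starcat \<Rightarrow> bool" where
  "pre_hilbert C \<longleftrightarrow> star_category C \<and>
     (\<exists>Z. zero_object C Z) \<and>
     (\<forall>X1 \<in> Ob C. \<forall>X2 \<in> Ob C. \<exists>P s1 r1 s2 r2. is_orthonormal_biproduct C X1 X2 P s1 r1 s2 r2) \<and>
     (\<forall>f \<in> Ar C. \<exists>m. is_kernel C f m \<and> Cmp C (Star C m) m = Idm C (Dom C m)) \<and>
     (\<forall>X \<in> Ob C. \<forall>P s1 r1 s2 r2 d. is_orthonormal_biproduct C X X P s1 r1 s2 r2 \<and>
        d \<in> hom C X P \<and> Cmp C r1 d = Idm C X \<and> Cmp C r2 d = Idm C X \<longrightarrow>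
        (\<exists>g. g \<in> Ar C \<and> is_kernel C g d))"

text \<open>h = f + g for f, g : A \<rightarrow> B, with the addition induced by biproducts:
  f + g = \<nabla> \<circ> \<langle>f, g\<rangle> (independent of the chosen biproduct).\<close>
definition mor_sum :: "('o, 'm) starcat \<Rightarrow> 'm \<Rightarrow> 'm \<Rightarrow> 'm \<Rightarrow> bool" where
  "mor_sum C f g h \<longleftrightarrow> (\<exists>A B. A \<in> Ob C \<and> B \<in> Ob C \<and> f \<in> hom C A B \<and> g \<in> hom C A B \<and>
     (\<exists>Q j1 q1 j2 q2 m n. is_biproduct C B B Q j1 q1 j2 q2 \<and>
        m \<in> hom C A Q \<and> n \<in> hom C Q B \<and>
        Cmp C q1 m = f \<and> Cmp C q2 m = g \<and> Cmp C n j1 = Idm C B \<and> Cmp C n j2 = Idm C B \<and>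
        h = Cmp C n m))"

definition hermitian :: "('o, 'm) starcat \<Rightarrow> 'm \<Rightarrow> bool" where
  "hermitian C c \<longleftrightarrow> (\<exists>A \<in> Ob C. c \<in> hom C A A) \<and> Star C c = c"

definition invertible :: "('o, 'm) starcat \<Rightarrow> 'm \<Rightarrow> bool" where
  "invertible C e \<longleftrightarrow> (\<exists>A B g. e \<in> hom C A B \<and> g \<in> hom C B A \<and>
     Cmp C g e = Idm C A \<and> Cmp C e g = Idm C B)"

definition inverse_mor :: "('o, 'm) starcat \<Rightarrow> 'm \<Rightarrow> 'm" where
  "inverse_mor C e = (THE g. \<exists>A B. e \<in> hom C A B \<and> g \<in> hom C B A \<and>
     Cmp C g e = Idm C A \<and> Cmp C e g = Idm C B)"

definition herm_le :: "('o, 'm) starcat \<Rightarrow> 'm \<Rightarrow> 'm \<Rightarrow> bool" where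
  "herm_le C c d \<longleftrightarrow> hermitian C c \<and> hermitian C d \<and> Dom C c = Dom C d \<and>
     (\<exists>Y \<in> Ob C. \<exists>y \<in> hom C (Dom C c) Y. mor_sum C c (Cmp C (Star C y) y) d)"

definition herm_less :: "('o, 'm) starcat \<Rightarrow> 'm \<Rightarrow> 'm \<Rightarrow> bool" where
  "herm_less C c d \<longleftrightarrow> herm_le C c d \<and> (\<exists>e. mor_sum C c e d \<and> invertible C e)"

end

theory Submission
  imports Defs
begin


locale PH =
  fixes C :: "('o, 'm) starcat"
  assumes ph: "pre_hilbert C"
begin

abbreviation cmp (infixr "\<cdot>" 55) where "g \<cdot> f \<equiv> Cmp C g f"
abbreviation st where "st f \<equiv> Star C f"

lemma sc: "star_category C" using ph unfolding pre_hilbert_def by blast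
lemma cat: "category C" using sc unfolding star_category_def by blast

lemma hom_iff: "f \<in> hom C X Y \<longleftrightarrow> f \<in> Ar C \<and> Dom C f = X \<and> Cod C f = Y"
  unfolding hom_def by auto

lemma ar_ob[simp]: "f \<in> Ar C \<Longrightarrow> Dom C f \<in> Ob C" "f \<in> Ar C \<Longrightarrow> Cod C f \<in> Ob C"
  using cat unfolding category_def by blast+

lemma in_hom: "f \<in> Ar C \<Longrightarrow> f \<in> hom C (Dom C f) (Cod C f)" by (simp add: hom_iff)

lemma comp_hom:
  assumes a1: "f \<in> Ar C" and a2: "g \<in> Ar C" and a3: "Cod C f = Dom C g"
  shows "g \<cdot> f \<in> hom C (Dom C f) (Cod C g)"
proof -
  have H: "\<forall>X \<in> Ob C. \<forall>Y \<in> Ob C. \<forall>Z \<in> Ob C. \<forall>f \<in> hom C X Y. \<forall>g \<in> hom C Y Z. Cmp C g f \<in> hom C X Z"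
    using cat unfolding category_def by blast
  have g': "g \<in> hom C (Cod C f) (Cod C g)" using in_hom[OF a2] a3 by simp
  show ?thesis using H[rule_format, OF ar_ob(1)[OF a1] ar_ob(2)[OF a1] ar_ob(2)[OF a2] in_hom[OF a1] g'] .
qed

lemma comp_simps[simp]:
  assumes "f \<in> Ar C" "g \<in> Ar C" "Cod C f = Dom C g"
  shows "g \<cdot> f \<in> Ar C" "Dom C (g \<cdot> f) = Dom C f" "Cod C (g \<cdot> f) = Cod C g"
  using comp_hom[OF assms] unfolding hom_iff by blast+

lemma assoc[simp]:
  assumes a1: "f \<in> Ar C" and a2: "g \<in> Ar C" and a3: "h \<in> Ar C" and a4: "Cod C f = Dom C g" and a5: "Cod C g = Dom C h"
  shows "(h \<cdot> g) \<cdot> f = h \<cdot> g \<cdot> f"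
proof -
  have H: "\<forall>W \<in> Ob C. \<forall>X \<in> Ob C. \<forall>Y \<in> Ob C. \<forall>Z \<in> Ob C.
        \<forall>f \<in> hom C W X. \<forall>g \<in> hom C X Y. \<forall>h \<in> hom C Y Z.
        Cmp C h (Cmp C g f) = Cmp C (Cmp C h g) f" using cat unfolding category_def by blast
  have g': "g \<in> hom C (Cod C f) (Cod C g)" using in_hom[OF a2] a4 by simp
  have h': "h \<in> hom C (Cod C g) (Cod C h)" using in_hom[OF a3] a5 by simp
  show ?thesis using H[rule_format, OF ar_ob(1)[OF a1] ar_ob(2)[OF a1] ar_ob(2)[OF a2] ar_ob(2)[OF a3] in_hom[OF a1] g' h'] by (rule sym)
qed

lemma id_hom: "X \<in> Ob C \<Longrightarrow> Idm C X \<in> hom C X X"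
  using cat unfolding category_def by blast

lemma id_simps[simp]:
  "X \<in> Ob C \<Longrightarrow> Idm C X \<in> Ar C" "X \<in> Ob C \<Longrightarrow> Dom C (Idm C X) = X" "X \<in> Ob C \<Longrightarrow> Cod C (Idm C X) = X"
  using id_hom unfolding hom_iff by blast+

lemma id_l[simp]: "f \<in> Ar C \<Longrightarrow> Cod C f = X \<Longrightarrow> Idm C X \<cdot> f = f"
proof -
  assume a: "f \<in> Ar C" "Cod C f = X"
  have "\<forall>X \<in> Ob C. \<forall>Y \<in> Ob C. \<forall>f \<in> hom C X Y. Cmp C f (Idm C X) = f \<and> Cmp C (Idm C Y) f = f"
    using cat unfolding category_def by blast
  from this[rule_format, OF ar_ob(1)[OF a(1)] ar_ob(2)[OF a(1)] in_hom[OF a(1)]]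
  show ?thesis using a(2) by blast
qed
lemma id_r[simp]: "f \<in> Ar C \<Longrightarrow> Dom C f = X \<Longrightarrow> f \<cdot> Idm C X = f"
proof -
  assume a: "f \<in> Ar C" "Dom C f = X"
  have "\<forall>X \<in> Ob C. \<forall>Y \<in> Ob C. \<forall>f \<in> hom C X Y. Cmp C f (Idm C X) = f \<and> Cmp C (Idm C Y) f = f"
    using cat unfolding category_def by blast
  from this[rule_format, OF ar_ob(1)[OF a(1)] ar_ob(2)[OF a(1)] in_hom[OF a(1)]]
  show ?thesis using a(2) by blast
qed

lemma st_hom: "f \<in> Ar C \<Longrightarrow> st f \<in> hom C (Cod C f) (Dom C f)"
proof -
  assume a: "f \<in> Ar C"
  have "\<forall>X \<in> Ob C. \<forall>Y \<in> Ob C. \<forall>f \<in> hom C X Y. Star C f \<in> hom C Y X"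
    using sc unfolding star_category_def by blast
  from this[rule_format, OF ar_ob(1)[OF a] ar_ob(2)[OF a] in_hom[OF a]]
  show ?thesis .
qed

lemma st_st[simp]: "f \<in> Ar C \<Longrightarrow> st (st f) = f"
  using sc unfolding star_category_def by blast

lemma st_simps[simp]:
  assumes "f \<in> Ar C"
  shows "st f \<in> Ar C" "Dom C (st f) = Cod C f" "Cod C (st f) = Dom C f"
  using st_hom[OF assms] unfolding hom_iff by blast+

lemma st_comp[simp]:
  assumes a1: "f \<in> Ar C" and a2: "g \<in> Ar C" and a3: "Cod C f = Dom C g"
  shows "st (g \<cdot> f) = st f \<cdot> st g"
proof -
  have H: "\<forall>X \<in> Ob C. \<forall>Y \<in> Ob C. \<forall>Z \<in> Ob C. \<forall>f \<in> hom C X Y. \<forall>g \<in> hom C Y Z.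
        Star C (Cmp C g f) = Cmp C (Star C f) (Star C g)" using sc unfolding star_category_def by blast
  have g': "g \<in> hom C (Cod C f) (Cod C g)" using in_hom[OF a2] a3 by simp
  show ?thesis using H[rule_format, OF ar_ob(1)[OF a1] ar_ob(2)[OF a1] ar_ob(2)[OF a2] in_hom[OF a1] g'] .
qed

lemma st_id[simp]: "X \<in> Ob C \<Longrightarrow> st (Idm C X) = Idm C X"
  using sc unfolding star_category_def by blast

lemma comp_in: "f \<in> hom C X Y \<Longrightarrow> g \<in> hom C Y Z \<Longrightarrow> g \<cdot> f \<in> hom C X Z"
  by (simp add: hom_iff)

lemma zo_Ob: "zero_object C Z \<Longrightarrow> Z \<in> Ob C" unfolding zero_object_def by blast
lemma zo_out: "zero_object C Z \<Longrightarrow> X \<in> Ob C \<Longrightarrow> \<exists>!f. f \<in> hom C X Z"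
  unfolding zero_object_def by blast
lemma zo_in: "zero_object C Z \<Longrightarrow> X \<in> Ob C \<Longrightarrow> \<exists>!f. f \<in> hom C Z X"
  unfolding zero_object_def by blast

lemma Z0_ex: "\<exists>Z. zero_object C Z" using ph unfolding pre_hilbert_def by blast

lemma hom_ob: "f \<in> hom C X Y \<Longrightarrow> X \<in> Ob C" "f \<in> hom C X Y \<Longrightarrow> Y \<in> Ob C"
  unfolding hom_iff using ar_ob by blast+

lemma zr_char:
  assumes Z: "zero_object C Z" and u: "u \<in> hom C X Z" and v: "v \<in> hom C Z Y"
  shows "zero_mor C X Y = v \<cdot> u"
proof -
  have X: "X \<in> Ob C" and Y: "Y \<in> Ob C" and ZO: "Z \<in> Ob C" using u v hom_ob by blast+
  have uniq: "x = v \<cdot> u" if H: "\<exists>Z' u' v'. zero_object C Z' \<and> u' \<in> hom C X Z' \<and> v' \<in> hom C Z' Y \<and> x = v' \<cdot> u'" for x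
  proof -
    obtain Z' u' v' where H': "zero_object C Z'" "u' \<in> hom C X Z'" "v' \<in> hom C Z' Y" "x = v' \<cdot> u'"
      using H by blast
    obtain p where p: "p \<in> hom C Z Z'" using zo_out[OF H'(1) ZO] by blast
    have pu: "p \<cdot> u \<in> hom C X Z'" using comp_in[OF u p] .
    have e1: "u' = p \<cdot> u" using zo_out[OF H'(1) X] pu H'(2) by blast
    have vp: "v' \<cdot> p \<in> hom C Z Y" using comp_in[OF p H'(3)] .
    have e2: "v = v' \<cdot> p" using zo_in[OF Z Y] vp v by blast
    show ?thesis using H'(4) e1 e2 u v p H'(3) by (simp add: hom_iff)
  qed
  show ?thesis unfolding zero_mor_def
    by (rule the_equality) (use assms uniq in blast)+
qed

lemma zr_hom: "X \<in> Ob C \<Longrightarrow> Y \<in> Ob C \<Longrightarrow> zero_mor C X Y \<in> hom C X Y"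
proof -
  assume X: "X \<in> Ob C" and Y: "Y \<in> Ob C"
  obtain Z where Z: "zero_object C Z" using Z0_ex by blast
  obtain u where u: "u \<in> hom C X Z" using zo_out[OF Z X] by blast
  obtain v where v: "v \<in> hom C Z Y" using zo_in[OF Z Y] by blast
  show ?thesis using zr_char[OF Z u v] comp_in[OF u v] by simp
qed

lemma zr_simps[simp]:
  "X \<in> Ob C \<Longrightarrow> Y \<in> Ob C \<Longrightarrow> zero_mor C X Y \<in> Ar C"
  "X \<in> Ob C \<Longrightarrow> Y \<in> Ob C \<Longrightarrow> Dom C (zero_mor C X Y) = X"
  "X \<in> Ob C \<Longrightarrow> Y \<in> Ob C \<Longrightarrow> Cod C (zero_mor C X Y) = Y"
  using zr_hom hom_iff by blast+

lemma zr_comp_l[simp]: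
  assumes x: "x \<in> Ar C" and c: "Cod C x = Y" and W: "W \<in> Ob C"
  shows "zero_mor C Y W \<cdot> x = zero_mor C (Dom C x) W"
proof -
  obtain Z where Z: "zero_object C Z" using Z0_ex by blast
  have Y: "Y \<in> Ob C" using x c by auto
  obtain u where u: "u \<in> hom C Y Z" using zo_out[OF Z Y] by blast
  obtain v where v: "v \<in> hom C Z W" using zo_in[OF Z W] by blast
  have xh: "x \<in> hom C (Dom C x) Y" using x c by (simp add: hom_iff)
  have "zero_mor C Y W \<cdot> x = v \<cdot> u \<cdot> x" using zr_char[OF Z u v] x c u v by (simp add: hom_iff)
  also have "\<dots> = zero_mor C (Dom C x) W" using zr_char[OF Z comp_in[OF xh u] v] by simp
  finally show ?thesis .
qed

lemma zr_comp_r[simp]: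
  assumes x: "x \<in> Ar C" and c: "Dom C x = Y" and V: "V \<in> Ob C"
  shows "x \<cdot> zero_mor C V Y = zero_mor C V (Cod C x)"
proof -
  obtain Z where Z: "zero_object C Z" using Z0_ex by blast
  have Y: "Y \<in> Ob C" using x c by auto
  obtain u where u: "u \<in> hom C V Z" using zo_out[OF Z V] by blast
  obtain v where v: "v \<in> hom C Z Y" using zo_in[OF Z Y] by blast
  have xh: "x \<in> hom C Y (Cod C x)" using x c by (simp add: hom_iff)
  have "x \<cdot> zero_mor C V Y = (x \<cdot> v) \<cdot> u" using zr_char[OF Z u v] x c u v by (simp add: hom_iff)
  also have "\<dots> = zero_mor C V (Cod C x)" using zr_char[OF Z u comp_in[OF v xh]] by simp
  finally show ?thesis .
qed

lemma st_zr[simp]: "X \<in> Ob C \<Longrightarrow> Y \<in> Ob C \<Longrightarrow> st (zero_mor C X Y) = zero_mor C Y X"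
proof -
  assume X: "X \<in> Ob C" and Y: "Y \<in> Ob C"
  obtain Z where Z: "zero_object C Z" using Z0_ex by blast
  obtain u where u: "u \<in> hom C X Z" using zo_out[OF Z X] by blast
  obtain v where v: "v \<in> hom C Z Y" using zo_in[OF Z Y] by blast
  have su: "st u \<in> hom C Z X" and sv: "st v \<in> hom C Y Z" using u v by (simp_all add: hom_iff)
  have "st (zero_mor C X Y) = st (v \<cdot> u)" using zr_char[OF Z u v] by simp
  also have "\<dots> = st u \<cdot> st v" using u v by (simp add: hom_iff)
  also have "\<dots> = zero_mor C Y X" using zr_char[OF Z sv su] by (rule sym)
  finally show ?thesis .
qed

lemma bp_D0:
  assumes "is_biproduct C X1 X2 P s1 r1 s2 r2"
  shows "P \<in> Ob C \<and> s1 \<in> hom C X1 P \<and> r1 \<in> hom C P X1 \<and> s2 \<in> hom C X2 P \<and> r2 \<in> hom C P X2 \<and>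
    r1 \<cdot> s1 = Idm C X1 \<and> r2 \<cdot> s2 = Idm C X2 \<and> r2 \<cdot> s1 = zero_mor C X1 X2 \<and> r1 \<cdot> s2 = zero_mor C X2 X1"
  using assms unfolding is_biproduct_def by (elim conjE) (intro conjI)

lemma bp_D:
  assumes "is_biproduct C X1 X2 P s1 r1 s2 r2"
  shows "P \<in> Ob C" "s1 \<in> hom C X1 P" "r1 \<in> hom C P X1" "s2 \<in> hom C X2 P" "r2 \<in> hom C P X2"
    "r1 \<cdot> s1 = Idm C X1" "r2 \<cdot> s2 = Idm C X2" "r2 \<cdot> s1 = zero_mor C X1 X2" "r1 \<cdot> s2 = zero_mor C X2 X1"
    "X1 \<in> Ob C" "X2 \<in> Ob C"
proof -
  note D = bp_D0[OF assms]
  show "P \<in> Ob C" "s1 \<in> hom C X1 P" "r1 \<in> hom C P X1" "s2 \<in> hom C X2 P" "r2 \<in> hom C P X2"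
    "r1 \<cdot> s1 = Idm C X1" "r2 \<cdot> s2 = Idm C X2" "r2 \<cdot> s1 = zero_mor C X1 X2" "r1 \<cdot> s2 = zero_mor C X2 X1"
    using D by blast+
  show "X1 \<in> Ob C" "X2 \<in> Ob C" using D hom_ob(1) by blast+
qed

lemma bp_P:
  assumes "is_biproduct C X1 X2 P s1 r1 s2 r2"
  shows "\<forall>W \<in> Ob C. \<forall>g1 \<in> hom C W X1. \<forall>g2 \<in> hom C W X2.
        \<exists>!m. m \<in> hom C W P \<and> Cmp C r1 m = g1 \<and> Cmp C r2 m = g2"
  using assms unfolding is_biproduct_def by (elim conjE)

lemma bp_C:
  assumes "is_biproduct C X1 X2 P s1 r1 s2 r2"
  shows "\<forall>W \<in> Ob C. \<forall>g1 \<in> hom C X1 W. \<forall>g2 \<in> hom C X2 W.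
        \<exists>!m. m \<in> hom C P W \<and> Cmp C m s1 = g1 \<and> Cmp C m s2 = g2"
  using assms unfolding is_biproduct_def by (elim conjE)

lemma bp_pair:
  assumes bp: "is_biproduct C X1 X2 P s1 r1 s2 r2" and g: "g1 \<in> hom C W X1" "g2 \<in> hom C W X2"
  obtains m where "m \<in> hom C W P" "r1 \<cdot> m = g1" "r2 \<cdot> m = g2"
proof -
  have W: "W \<in> Ob C" using g hom_ob by blast
  have "\<exists>!m. m \<in> hom C W P \<and> Cmp C r1 m = g1 \<and> Cmp C r2 m = g2"
    using bp_P[OF bp, rule_format, OF W g] .
  then have "\<exists>m. m \<in> hom C W P \<and> Cmp C r1 m = g1 \<and> Cmp C r2 m = g2" by (rule ex1_implies_ex)
  then show ?thesis using that by blast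
qed

lemma bp_pair_uniq:
  assumes bp: "is_biproduct C X1 X2 P s1 r1 s2 r2" and m: "m \<in> hom C W P" "m' \<in> hom C W P"
    and e: "r1 \<cdot> m = r1 \<cdot> m'" "r2 \<cdot> m = r2 \<cdot> m'"
  shows "m = m'"
proof -
  have W: "W \<in> Ob C" using m hom_ob by blast
  have g: "r1 \<cdot> m \<in> hom C W X1" "r2 \<cdot> m \<in> hom C W X2"
    using comp_in[OF m(1) bp_D(3)[OF bp]] comp_in[OF m(1) bp_D(5)[OF bp]] by auto
  have E: "\<exists>!x. x \<in> hom C W P \<and> Cmp C r1 x = r1 \<cdot> m \<and> Cmp C r2 x = r2 \<cdot> m"
    using bp_P[OF bp, rule_format, OF W g] .
  show ?thesis using E m e by (metis (no_types, lifting))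
qed

lemma bp_copair:
  assumes bp: "is_biproduct C X1 X2 P s1 r1 s2 r2" and g: "g1 \<in> hom C X1 W" "g2 \<in> hom C X2 W"
  obtains m where "m \<in> hom C P W" "m \<cdot> s1 = g1" "m \<cdot> s2 = g2"
proof -
  have W: "W \<in> Ob C" using g hom_ob by blast
  have "\<exists>!m. m \<in> hom C P W \<and> Cmp C m s1 = g1 \<and> Cmp C m s2 = g2"
    using bp_C[OF bp, rule_format, OF W g] .
  then have "\<exists>m. m \<in> hom C P W \<and> Cmp C m s1 = g1 \<and> Cmp C m s2 = g2" by (rule ex1_implies_ex)
  then show ?thesis using that by blast
qed

lemma bp_copair_uniq:
  assumes bp: "is_biproduct C X1 X2 P s1 r1 s2 r2" and m: "m \<in> hom C P W" "m' \<in> hom C P W"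
    and e: "m \<cdot> s1 = m' \<cdot> s1" "m \<cdot> s2 = m' \<cdot> s2"
  shows "m = m'"
proof -
  have W: "W \<in> Ob C" using m hom_ob by blast
  have g: "m \<cdot> s1 \<in> hom C X1 W" "m \<cdot> s2 \<in> hom C X2 W"
    using comp_in[OF bp_D(2)[OF bp] m(1)] comp_in[OF bp_D(4)[OF bp] m(1)] by auto
  have E: "\<exists>!x. x \<in> hom C P W \<and> Cmp C x s1 = m \<cdot> s1 \<and> Cmp C x s2 = m \<cdot> s2"
    using bp_C[OF bp, rule_format, OF W g] .
  show ?thesis using E m e by (metis (no_types, lifting))
qed

lemma bp_swap:
  assumes bp: "is_biproduct C X1 X2 P s1 r1 s2 r2"
  shows "is_biproduct C X2 X1 P s2 r2 s1 r1"
proof -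
  note D = bp_D[OF bp]
  have Pr: "\<forall>W\<in>Ob C. \<forall>g1\<in>hom C W X2. \<forall>g2\<in>hom C W X1. \<exists>!m. m \<in> hom C W P \<and> r2 \<cdot> m = g1 \<and> r1 \<cdot> m = g2"
  proof (intro ballI)
    fix W g1 g2 assume H: "W \<in> Ob C" "g1 \<in> hom C W X2" "g2 \<in> hom C W X1"
    obtain m where m: "m \<in> hom C W P" "r1 \<cdot> m = g2" "r2 \<cdot> m = g1" using bp_pair[OF bp H(3) H(2)] by blast
    show "\<exists>!m. m \<in> hom C W P \<and> r2 \<cdot> m = g1 \<and> r1 \<cdot> m = g2"
    proof (rule ex1I[of _ m])
      show "m \<in> hom C W P \<and> r2 \<cdot> m = g1 \<and> r1 \<cdot> m = g2" using m by simp
      fix m' assume "m' \<in> hom C W P \<and> r2 \<cdot> m' = g1 \<and> r1 \<cdot> m' = g2"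
      then show "m' = m" using bp_pair_uniq[OF bp, of m' W m] m by simp
    qed
  qed
  have Co: "\<forall>W\<in>Ob C. \<forall>g1\<in>hom C X2 W. \<forall>g2\<in>hom C X1 W. \<exists>!m. m \<in> hom C P W \<and> m \<cdot> s2 = g1 \<and> m \<cdot> s1 = g2"
  proof (intro ballI)
    fix W g1 g2 assume H: "W \<in> Ob C" "g1 \<in> hom C X2 W" "g2 \<in> hom C X1 W"
    obtain m where m: "m \<in> hom C P W" "m \<cdot> s1 = g2" "m \<cdot> s2 = g1" using bp_copair[OF bp H(3) H(2)] by blast
    show "\<exists>!m. m \<in> hom C P W \<and> m \<cdot> s2 = g1 \<and> m \<cdot> s1 = g2"
    proof (rule ex1I[of _ m])
      show "m \<in> hom C P W \<and> m \<cdot> s2 = g1 \<and> m \<cdot> s1 = g2" using m by simp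
      fix m' assume "m' \<in> hom C P W \<and> m' \<cdot> s2 = g1 \<and> m' \<cdot> s1 = g2"
      then show "m' = m" using bp_copair_uniq[OF bp, of m' W m] m by simp
    qed
  qed
  have D0: "P \<in> Ob C \<and> s1 \<in> hom C X1 P \<and> r1 \<in> hom C P X1 \<and> s2 \<in> hom C X2 P \<and> r2 \<in> hom C P X2 \<and>
    r1 \<cdot> s1 = Idm C X1 \<and> r2 \<cdot> s2 = Idm C X2 \<and> r2 \<cdot> s1 = zero_mor C X1 X2 \<and> r1 \<cdot> s2 = zero_mor C X2 X1"
    using bp_D0[OF bp] .
  show ?thesis unfolding is_biproduct_def using D0 Pr Co by (elim conjE) (intro conjI)
qed

lemma ph_R2: "\<forall>X1 \<in> Ob C. \<forall>X2 \<in> Ob C. \<exists>P s1 r1 s2 r2. is_orthonormal_biproduct C X1 X2 P s1 r1 s2 r2"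
  using ph unfolding pre_hilbert_def by (elim conjE)
lemma ph_R3: "\<forall>f \<in> Ar C. \<exists>m. is_kernel C f m \<and> Cmp C (Star C m) m = Idm C (Dom C m)"
  using ph unfolding pre_hilbert_def by (elim conjE)
lemma ph_R4: "\<forall>X \<in> Ob C. \<forall>P s1 r1 s2 r2 d. is_orthonormal_biproduct C X X P s1 r1 s2 r2 \<and>
        d \<in> hom C X P \<and> Cmp C r1 d = Idm C X \<and> Cmp C r2 d = Idm C X \<longrightarrow>
        (\<exists>g. g \<in> Ar C \<and> is_kernel C g d)"
  using ph unfolding pre_hilbert_def by (elim conjE) assumption

lemma bp_ex:
  assumes "X1 \<in> Ob C" "X2 \<in> Ob C"
  obtains P s1 r1 s2 r2 where "is_biproduct C X1 X2 P s1 r1 s2 r2" "r1 = st s1" "r2 = st s2"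
proof -
  obtain P s1 r1 s2 r2 where "is_orthonormal_biproduct C X1 X2 P s1 r1 s2 r2"
    using ph_R2[rule_format, OF assms] by blast
  then show ?thesis using that unfolding is_orthonormal_biproduct_def by blast
qed

end


context PH
begin

lemma assoc_cont:
  assumes "u \<cdot> v = w" "u \<in> Ar C" "v \<in> Ar C" "Cod C v = Dom C u" "x \<in> Ar C" "Cod C x = Dom C v"
  shows "u \<cdot> v \<cdot> x = w \<cdot> x"
  using assms assoc[of x v u] by simp

lemma sum_D:
  assumes "mor_sum C f g h"
  obtains A B Q j1 q1 j2 q2 m n where "A \<in> Ob C" "B \<in> Ob C" "f \<in> hom C A B" "g \<in> hom C A B"
    "is_biproduct C B B Q j1 q1 j2 q2" "m \<in> hom C A Q" "n \<in> hom C Q B" "q1 \<cdot> m = f" "q2 \<cdot> m = g"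
    "n \<cdot> j1 = Idm C B" "n \<cdot> j2 = Idm C B" "h = n \<cdot> m"
  using assms unfolding mor_sum_def by (elim exE conjE) (rule that; assumption)

lemma sum_I:
  assumes bp: "is_biproduct C B B Q j1 q1 j2 q2" and m: "m \<in> hom C A Q" and n: "n \<in> hom C Q B"
    and n1: "n \<cdot> j1 = Idm C B" and n2: "n \<cdot> j2 = Idm C B"
  shows "mor_sum C (q1 \<cdot> m) (q2 \<cdot> m) (n \<cdot> m)"
proof -
  have A: "A \<in> Ob C" and B: "B \<in> Ob C" using m n hom_ob by blast+
  have f: "q1 \<cdot> m \<in> hom C A B" using comp_in[OF m bp_D(3)[OF bp]] .
  have g: "q2 \<cdot> m \<in> hom C A B" using comp_in[OF m bp_D(5)[OF bp]] .
  show ?thesis unfolding mor_sum_def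
    apply (rule exI[where x=A], rule exI[where x=B])
    apply (intro conjI A B f g)
    apply (rule exI[where x=Q], rule exI[where x=j1], rule exI[where x=q1], rule exI[where x=j2],
      rule exI[where x=q2], rule exI[where x=m], rule exI[where x=n])
    using bp m n n1 n2 by (intro conjI refl)
qed

lemma sum_uniq:
  assumes s1: "mor_sum C f g h" and s2: "mor_sum C f g h'"
  shows "h = h'"
proof -
  obtain A B Q j1 q1 j2 q2 m n where H: "A \<in> Ob C" "B \<in> Ob C" "f \<in> hom C A B" "g \<in> hom C A B"
    "is_biproduct C B B Q j1 q1 j2 q2" "m \<in> hom C A Q" "n \<in> hom C Q B" "q1 \<cdot> m = f" "q2 \<cdot> m = g"
    "n \<cdot> j1 = Idm C B" "n \<cdot> j2 = Idm C B" "h = n \<cdot> m" using sum_D[OF s1] by blast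
  obtain A' B' Q' j1' q1' j2' q2' m' n' where H': "A' \<in> Ob C" "B' \<in> Ob C" "f \<in> hom C A' B'" "g \<in> hom C A' B'"
    "is_biproduct C B' B' Q' j1' q1' j2' q2'" "m' \<in> hom C A' Q'" "n' \<in> hom C Q' B'" "q1' \<cdot> m' = f" "q2' \<cdot> m' = g"
    "n' \<cdot> j1' = Idm C B'" "n' \<cdot> j2' = Idm C B'" "h' = n' \<cdot> m'" using sum_D[OF s2] by blast
  have AA: "A' = A" "B' = B" using H(3) H'(3) unfolding hom_iff by auto
  note bp = H(5) and bp' = H'(5)[unfolded AA]
  note D = bp_D[OF bp] and D' = bp_D[OF bp']
  obtain p where p: "p \<in> hom C Q Q'" "q1' \<cdot> p = q1" "q2' \<cdot> p = q2"
    using bp_pair[OF bp' D(3) D(5)] by blast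
  have pm: "p \<cdot> m = m'"
  proof (rule bp_pair_uniq[OF bp'])
    show "p \<cdot> m \<in> hom C A Q'" using comp_in[OF H(6) p(1)] .
    show "m' \<in> hom C A Q'" using H'(6) AA by simp
    show "q1' \<cdot> p \<cdot> m = q1' \<cdot> m'" using assoc_cont[OF p(2)] H p D' H' AA by (simp add: hom_iff)
    show "q2' \<cdot> p \<cdot> m = q2' \<cdot> m'" using assoc_cont[OF p(3)] H p D' H' AA by (simp add: hom_iff)
  qed
  have pj1: "p \<cdot> j1 = j1'"
  proof (rule bp_pair_uniq[OF bp'])
    show "p \<cdot> j1 \<in> hom C B Q'" using comp_in[OF D(2) p(1)] .
    show "j1' \<in> hom C B Q'" using D' by simp
    show "q1' \<cdot> p \<cdot> j1 = q1' \<cdot> j1'" using assoc_cont[OF p(2)] D p D' by (simp add: hom_iff)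
    show "q2' \<cdot> p \<cdot> j1 = q2' \<cdot> j1'" using assoc_cont[OF p(3)] D p D' by (simp add: hom_iff)
  qed
  have pj2: "p \<cdot> j2 = j2'"
  proof (rule bp_pair_uniq[OF bp'])
    show "p \<cdot> j2 \<in> hom C B Q'" using comp_in[OF D(4) p(1)] .
    show "j2' \<in> hom C B Q'" using D' by simp
    show "q1' \<cdot> p \<cdot> j2 = q1' \<cdot> j2'" using assoc_cont[OF p(2)] D p D' by (simp add: hom_iff)
    show "q2' \<cdot> p \<cdot> j2 = q2' \<cdot> j2'" using assoc_cont[OF p(3)] D p D' by (simp add: hom_iff)
  qed
  have np: "n' \<cdot> p = n"
  proof (rule bp_copair_uniq[OF bp])
    show "n' \<cdot> p \<in> hom C Q B" using comp_in[OF p(1)] H'(7) AA by simp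
    show "n \<in> hom C Q B" using H(7) .
    show "(n' \<cdot> p) \<cdot> j1 = n \<cdot> j1" using pj1 H H' AA D p by (simp add: hom_iff)
    show "(n' \<cdot> p) \<cdot> j2 = n \<cdot> j2" using pj2 H H' AA D p by (simp add: hom_iff)
  qed
  have "h = (n' \<cdot> p) \<cdot> m" using H(12) np by simp
  also have "\<dots> = n' \<cdot> (p \<cdot> m)" using H(6) p(1) H'(7) AA by (simp add: hom_iff)
  also have "\<dots> = h'" using pm H'(12) by simp
  finally show ?thesis .
qed

definition add where "add f g = (THE h. mor_sum C f g h)"

lemma sum_add:
  assumes "mor_sum C f g h" shows "add f g = h"
  unfolding add_def
proof (rule the_equality)
  show "mor_sum C f g h" by fact
  fix x assume "mor_sum C f g x"
  then show "x = h" by (rule sum_uniq[OF _ assms])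
qed

lemma sum_ex:
  assumes f: "f \<in> hom C A B" and g: "g \<in> hom C A B"
  shows "mor_sum C f g (add f g)"
proof -
  have B: "B \<in> Ob C" using f hom_ob by blast
  obtain Q j1 q1 j2 q2 where bp: "is_biproduct C B B Q j1 q1 j2 q2" and "q1 = st j1" "q2 = st j2"
    by (rule bp_ex[OF B B])
  obtain m where m: "m \<in> hom C A Q" "q1 \<cdot> m = f" "q2 \<cdot> m = g" using bp_pair[OF bp f g] by blast
  obtain n where n: "n \<in> hom C Q B" "n \<cdot> j1 = Idm C B" "n \<cdot> j2 = Idm C B"
    using bp_copair[OF bp id_hom[OF B] id_hom[OF B]] by blast
  have "mor_sum C f g (n \<cdot> m)" using sum_I[OF bp m(1) n] m by simp
  moreover from this have "add f g = n \<cdot> m" by (rule sum_add)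
  ultimately show ?thesis by simp
qed

lemma add_hom: "f \<in> hom C A B \<Longrightarrow> g \<in> hom C A B \<Longrightarrow> add f g \<in> hom C A B"
proof -
  assume f: "f \<in> hom C A B" and g: "g \<in> hom C A B"
  obtain A' B' Q j1 q1 j2 q2 m n where H: "A' \<in> Ob C" "B' \<in> Ob C" "f \<in> hom C A' B'" "g \<in> hom C A' B'"
    "is_biproduct C B' B' Q j1 q1 j2 q2" "m \<in> hom C A' Q" "n \<in> hom C Q B'" "q1 \<cdot> m = f" "q2 \<cdot> m = g"
    "n \<cdot> j1 = Idm C B'" "n \<cdot> j2 = Idm C B'" "add f g = n \<cdot> m" using sum_D[OF sum_ex[OF f g]] by blast
  have "A' = A" "B' = B" using f H(3) unfolding hom_iff by auto
  then show ?thesis using comp_in[OF H(6) H(7)] H(12) by simp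
qed

lemma add_simps[simp]:
  assumes "f \<in> Ar C" "g \<in> Ar C" "Dom C g = Dom C f" "Cod C g = Cod C f"
  shows "add f g \<in> Ar C" "Dom C (add f g) = Dom C f" "Cod C (add f g) = Cod C f"
proof -
  have "f \<in> hom C (Dom C f) (Cod C f)" "g \<in> hom C (Dom C f) (Cod C f)" using assms by (simp_all add: hom_iff)
  from add_hom[OF this] show "add f g \<in> Ar C" "Dom C (add f g) = Dom C f" "Cod C (add f g) = Cod C f"
    unfolding hom_iff by blast+
qed

lemma sum_via:
  assumes bp: "is_biproduct C B B Q j1 q1 j2 q2" and m: "m \<in> hom C A Q" and n: "n \<in> hom C Q B"
    and n1: "n \<cdot> j1 = Idm C B" and n2: "n \<cdot> j2 = Idm C B"
  shows "n \<cdot> m = add (q1 \<cdot> m) (q2 \<cdot> m)"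
  using sum_add[OF sum_I[OF assms]] by simp

end


context PH
begin

lemma cont:
  assumes "u \<cdot> v = w" "v \<in> hom C X Y" "u \<in> hom C Y Z" "x \<in> Ar C" "Cod C x = X"
  shows "u \<cdot> v \<cdot> x = w \<cdot> x"
  using assms assoc[of x v u] by (simp add: hom_iff)

lemma bp_split:
  assumes bp: "is_biproduct C X1 X2 P s1 r1 s2 r2" and c: "c \<in> hom C P V" and d: "d \<in> hom C W P"
  shows "c \<cdot> d = add (c \<cdot> s1 \<cdot> r1 \<cdot> d) (c \<cdot> s2 \<cdot> r2 \<cdot> d)"
proof -
  have V: "V \<in> Ob C" using c hom_ob by blast
  obtain Q S1 R1 S2 R2 where bq: "is_biproduct C V V Q S1 R1 S2 R2" and "R1 = st S1" "R2 = st S2"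
    by (rule bp_ex[OF V V])
  note D = bp_D[OF bp] and E = bp_D[OF bq]
  obtain n where n: "n \<in> hom C Q V" "n \<cdot> S1 = Idm C V" "n \<cdot> S2 = Idm C V"
    using bp_copair[OF bq id_hom[OF V] id_hom[OF V]] by blast
  have h1: "c \<cdot> s1 \<cdot> r1 \<in> hom C P V" using c D by (simp add: hom_iff)
  have h2: "c \<cdot> s2 \<cdot> r2 \<in> hom C P V" using c D by (simp add: hom_iff)
  obtain e where e: "e \<in> hom C P Q" "R1 \<cdot> e = c \<cdot> s1 \<cdot> r1" "R2 \<cdot> e = c \<cdot> s2 \<cdot> r2"
    using bp_pair[OF bq h1 h2] by blast
  have es1: "e \<cdot> s1 = S1 \<cdot> c \<cdot> s1"
  proof (rule bp_pair_uniq[OF bq])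
    show "e \<cdot> s1 \<in> hom C X1 Q" using e D by (simp add: hom_iff)
    show "S1 \<cdot> c \<cdot> s1 \<in> hom C X1 Q" using c E D by (simp add: hom_iff)
    show "R1 \<cdot> e \<cdot> s1 = R1 \<cdot> S1 \<cdot> c \<cdot> s1"
      using c D E e by (simp add: hom_iff cont[OF e(2) e(1) E(3)] cont[OF E(6) E(2) E(3)])
    show "R2 \<cdot> e \<cdot> s1 = R2 \<cdot> S1 \<cdot> c \<cdot> s1"
      using c D E e by (simp add: hom_iff cont[OF e(3) e(1) E(5)] cont[OF E(8) E(2) E(5)])
  qed
  have es2: "e \<cdot> s2 = S2 \<cdot> c \<cdot> s2"
  proof (rule bp_pair_uniq[OF bq])
    show "e \<cdot> s2 \<in> hom C X2 Q" using e D by (simp add: hom_iff)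
    show "S2 \<cdot> c \<cdot> s2 \<in> hom C X2 Q" using c E D by (simp add: hom_iff)
    show "R1 \<cdot> e \<cdot> s2 = R1 \<cdot> S2 \<cdot> c \<cdot> s2"
      using c D E e by (simp add: hom_iff cont[OF e(2) e(1) E(3)] cont[OF E(9) E(4) E(3)])
    show "R2 \<cdot> e \<cdot> s2 = R2 \<cdot> S2 \<cdot> c \<cdot> s2"
      using c D E e by (simp add: hom_iff cont[OF e(3) e(1) E(5)] cont[OF E(7) E(4) E(5)])
  qed
  have ne: "n \<cdot> e = c"
  proof (rule bp_copair_uniq[OF bp])
    show "n \<cdot> e \<in> hom C P V" using n e by (simp add: hom_iff)
    show "c \<in> hom C P V" by fact
    show "(n \<cdot> e) \<cdot> s1 = c \<cdot> s1"
      using n e D E c es1 by (simp add: hom_iff cont[OF n(2) E(2) n(1)])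
    show "(n \<cdot> e) \<cdot> s2 = c \<cdot> s2"
      using n e D E c es2 by (simp add: hom_iff cont[OF n(3) E(4) n(1)])
  qed
  have "n \<cdot> e \<cdot> d = c \<cdot> d" by (rule cont[OF ne e(1) n(1)]) (use d in \<open>simp add: hom_iff\<close>)+
  then have "c \<cdot> d = n \<cdot> (e \<cdot> d)" by simp
  also have "\<dots> = add (R1 \<cdot> e \<cdot> d) (R2 \<cdot> e \<cdot> d)"
    using sum_via[OF bq comp_in[OF d e(1)] n] .
  also have "\<dots> = add (c \<cdot> s1 \<cdot> r1 \<cdot> d) (c \<cdot> s2 \<cdot> r2 \<cdot> d)"
    using e d D E c by (simp add: hom_iff cont[OF e(2) e(1) E(3)] cont[OF e(3) e(1) E(5)])
  finally show ?thesis .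
qed


lemma sum_rep:
  assumes f: "f \<in> hom C A B" and g: "g \<in> hom C A B"
  obtains Q j1 q1 j2 q2 m n where "is_biproduct C B B Q j1 q1 j2 q2" "m \<in> hom C A Q" "n \<in> hom C Q B"
    "q1 \<cdot> m = f" "q2 \<cdot> m = g" "n \<cdot> j1 = Idm C B" "n \<cdot> j2 = Idm C B" "add f g = n \<cdot> m"
proof -
  obtain A' B' Q j1 q1 j2 q2 m n where H: "A' \<in> Ob C" "B' \<in> Ob C" "f \<in> hom C A' B'" "g \<in> hom C A' B'"
    "is_biproduct C B' B' Q j1 q1 j2 q2" "m \<in> hom C A' Q" "n \<in> hom C Q B'" "q1 \<cdot> m = f" "q2 \<cdot> m = g"
    "n \<cdot> j1 = Idm C B'" "n \<cdot> j2 = Idm C B'" "add f g = n \<cdot> m" by (rule sum_D[OF sum_ex[OF f g]])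
  have AB: "A' = A" "B' = B" using f H(3) unfolding hom_iff by auto
  show ?thesis by (rule that[of Q j1 q1 j2 q2 m n]) (use H AB in simp_all)
qed

lemma add_comm:
  assumes f: "f \<in> hom C A B" and g: "g \<in> hom C A B"
  shows "add f g = add g f"
proof -
  obtain Q j1 q1 j2 q2 m n where H: "is_biproduct C B B Q j1 q1 j2 q2" "m \<in> hom C A Q" "n \<in> hom C Q B"
    "q1 \<cdot> m = f" "q2 \<cdot> m = g" "n \<cdot> j1 = Idm C B" "n \<cdot> j2 = Idm C B" "add f g = n \<cdot> m"
    by (rule sum_rep[OF f g])
  have "n \<cdot> m = add (q2 \<cdot> m) (q1 \<cdot> m)" by (rule sum_via[OF bp_swap[OF H(1)] H(2) H(3) H(7) H(6)])
  then show ?thesis using H by simp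
qed

lemma add_zr:
  assumes f: "f \<in> hom C A B"
  shows "add f (zero_mor C A B) = f"
proof -
  have A: "A \<in> Ob C" and B: "B \<in> Ob C" using f hom_ob by blast+
  obtain Q j1 q1 j2 q2 where bq: "is_biproduct C B B Q j1 q1 j2 q2" and "q1 = st j1" "q2 = st j2"
    by (rule bp_ex[OF B B])
  note E = bp_D[OF bq]
  obtain n where n: "n \<in> hom C Q B" "n \<cdot> j1 = Idm C B" "n \<cdot> j2 = Idm C B"
    using bp_copair[OF bq id_hom[OF B] id_hom[OF B]] by blast
  have "n \<cdot> (j1 \<cdot> f) = add (q1 \<cdot> j1 \<cdot> f) (q2 \<cdot> j1 \<cdot> f)" by (rule sum_via[OF bq comp_in[OF f E(2)] n])
  moreover have "n \<cdot> (j1 \<cdot> f) = f" using n E f by (simp add: hom_iff cont[OF n(2) E(2) n(1)])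
  moreover have "q1 \<cdot> j1 \<cdot> f = f" using n E f by (simp add: hom_iff cont[OF E(6) E(2) E(3)])
  moreover have "q2 \<cdot> j1 \<cdot> f = zero_mor C A B" using n E f by (simp add: hom_iff cont[OF E(8) E(2) E(5)])
  ultimately show ?thesis by simp
qed

lemma zr_add:
  assumes f: "f \<in> hom C A B"
  shows "add (zero_mor C A B) f = f"
proof -
  have A: "A \<in> Ob C" and B: "B \<in> Ob C" using f hom_ob by blast+
  show ?thesis using add_comm[OF zr_hom[OF A B] f] add_zr[OF f] by simp
qed

lemma comp_add_l:
  assumes f: "f \<in> hom C A B" and g: "g \<in> hom C A B" and k: "k \<in> hom C B B'"
  shows "k \<cdot> add f g = add (k \<cdot> f) (k \<cdot> g)"
proof -
  obtain Q j1 q1 j2 q2 m n where H: "is_biproduct C B B Q j1 q1 j2 q2" "m \<in> hom C A Q" "n \<in> hom C Q B"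
    "q1 \<cdot> m = f" "q2 \<cdot> m = g" "n \<cdot> j1 = Idm C B" "n \<cdot> j2 = Idm C B" "add f g = n \<cdot> m"
    by (rule sum_rep[OF f g])
  note E = bp_D[OF H(1)]
  have "(k \<cdot> n) \<cdot> m = add ((k \<cdot> n) \<cdot> j1 \<cdot> q1 \<cdot> m) ((k \<cdot> n) \<cdot> j2 \<cdot> q2 \<cdot> m)"
    by (rule bp_split[OF H(1) comp_in[OF H(3) k] H(2)])
  moreover have "(k \<cdot> n) \<cdot> m = k \<cdot> add f g" using H k by (simp add: hom_iff)
  moreover have "(k \<cdot> n) \<cdot> j1 \<cdot> q1 \<cdot> m = k \<cdot> f"
    using H k E f g by (simp add: hom_iff cont[OF H(6) E(2) H(3)])
  moreover have "(k \<cdot> n) \<cdot> j2 \<cdot> q2 \<cdot> m = k \<cdot> g"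
    using H k E f g by (simp add: hom_iff cont[OF H(7) E(4) H(3)])
  ultimately show ?thesis by simp
qed

lemma comp_add_r:
  assumes f: "f \<in> hom C A B" and g: "g \<in> hom C A B" and k: "k \<in> hom C A' A"
  shows "add f g \<cdot> k = add (f \<cdot> k) (g \<cdot> k)"
proof -
  obtain Q j1 q1 j2 q2 m n where H: "is_biproduct C B B Q j1 q1 j2 q2" "m \<in> hom C A Q" "n \<in> hom C Q B"
    "q1 \<cdot> m = f" "q2 \<cdot> m = g" "n \<cdot> j1 = Idm C B" "n \<cdot> j2 = Idm C B" "add f g = n \<cdot> m"
    by (rule sum_rep[OF f g])
  note E = bp_D[OF H(1)]
  have "n \<cdot> (m \<cdot> k) = add (q1 \<cdot> m \<cdot> k) (q2 \<cdot> m \<cdot> k)"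
    by (rule sum_via[OF H(1) comp_in[OF k H(2)] H(3) H(6) H(7)])
  moreover have "n \<cdot> (m \<cdot> k) = add f g \<cdot> k" using H k by (simp add: hom_iff)
  moreover have "q1 \<cdot> m \<cdot> k = f \<cdot> k" by (rule cont[OF H(4) H(2) E(3)]) (use k in \<open>simp_all add: hom_iff\<close>)
  moreover have "q2 \<cdot> m \<cdot> k = g \<cdot> k" by (rule cont[OF H(5) H(2) E(5)]) (use k in \<open>simp_all add: hom_iff\<close>)
  ultimately show ?thesis by simp
qed


lemma add_assoc:
  assumes f: "f \<in> hom C A B" and g: "g \<in> hom C A B" and h: "h \<in> hom C A B"
  shows "add (add f g) h = add f (add g h)"
proof -
  have A: "A \<in> Ob C" and B: "B \<in> Ob C" using f hom_ob by blast+
  obtain P s1 r1 s2 r2 where bp: "is_biproduct C A A P s1 r1 s2 r2" and "r1 = st s1" "r2 = st s2"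
    by (rule bp_ex[OF A A])
  note D = bp_D[OF bp]
  obtain dl where dl: "dl \<in> hom C A P" "r1 \<cdot> dl = Idm C A" "r2 \<cdot> dl = Idm C A"
    using bp_pair[OF bp id_hom[OF A] id_hom[OF A]] by blast
  obtain c1 where c1: "c1 \<in> hom C P B" "c1 \<cdot> s1 = f" "c1 \<cdot> s2 = g"
    using bp_copair[OF bp f g] by blast
  obtain c2 where c2: "c2 \<in> hom C P B" "c2 \<cdot> s1 = zero_mor C A B" "c2 \<cdot> s2 = h"
    using bp_copair[OF bp zr_hom[OF A B] h] by blast
  have c: "add c1 c2 \<in> hom C P B" using add_hom[OF c1(1) c2(1)] .
  have cs1: "add c1 c2 \<cdot> s1 = f" using comp_add_r[OF c1(1) c2(1) D(2)] c1 c2 add_zr[OF f] by simp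
  have cs2: "add c1 c2 \<cdot> s2 = add g h" using comp_add_r[OF c1(1) c2(1) D(4)] c1 c2 by simp
  have "add c1 c2 \<cdot> dl = add (add c1 c2 \<cdot> s1 \<cdot> r1 \<cdot> dl) (add c1 c2 \<cdot> s2 \<cdot> r2 \<cdot> dl)"
    by (rule bp_split[OF bp c dl(1)])
  also have "\<dots> = add f (add g h)" using dl D cs1 cs2 by (simp add: hom_iff)
  finally have e1: "add c1 c2 \<cdot> dl = add f (add g h)" .
  have "c1 \<cdot> dl = add (c1 \<cdot> s1 \<cdot> r1 \<cdot> dl) (c1 \<cdot> s2 \<cdot> r2 \<cdot> dl)" by (rule bp_split[OF bp c1(1) dl(1)])
  also have "\<dots> = add f g" using dl D c1 by (simp add: hom_iff)
  finally have e2: "c1 \<cdot> dl = add f g" .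
  have "c2 \<cdot> dl = add (c2 \<cdot> s1 \<cdot> r1 \<cdot> dl) (c2 \<cdot> s2 \<cdot> r2 \<cdot> dl)" by (rule bp_split[OF bp c2(1) dl(1)])
  also have "\<dots> = h" using dl D c2 zr_add[OF h] by (simp add: hom_iff)
  finally have e3: "c2 \<cdot> dl = h" .
  have "add c1 c2 \<cdot> dl = add (c1 \<cdot> dl) (c2 \<cdot> dl)" by (rule comp_add_r[OF c1(1) c2(1) dl(1)])
  then show ?thesis using e1 e2 e3 by simp
qed

lemma st_add:
  assumes f: "f \<in> hom C A B" and g: "g \<in> hom C A B"
  shows "st (add f g) = add (st f) (st g)"
proof -
  have A: "A \<in> Ob C" and B: "B \<in> Ob C" using f hom_ob by blast+
  obtain Q j1 q1 j2 q2 where bq: "is_biproduct C B B Q j1 q1 j2 q2" and o1: "q1 = st j1" and o2: "q2 = st j2"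
    by (rule bp_ex[OF B B])
  note E = bp_D[OF bq]
  obtain n where n: "n \<in> hom C Q B" "n \<cdot> j1 = Idm C B" "n \<cdot> j2 = Idm C B"
    using bp_copair[OF bq id_hom[OF B] id_hom[OF B]] by blast
  obtain m where m: "m \<in> hom C A Q" "q1 \<cdot> m = f" "q2 \<cdot> m = g" using bp_pair[OF bq f g] by blast
  have "n \<cdot> m = add (q1 \<cdot> m) (q2 \<cdot> m)" by (rule sum_via[OF bq m(1) n])
  then have s: "add f g = n \<cdot> m" using m by simp
  have sm: "st m \<in> hom C Q A" and sn: "st n \<in> hom C B Q" using m n by (simp_all add: hom_iff)
  have "st (add f g) = st m \<cdot> st n" using s m n by (simp add: hom_iff)
  also have "\<dots> = add (st m \<cdot> j1 \<cdot> q1 \<cdot> st n) (st m \<cdot> j2 \<cdot> q2 \<cdot> st n)" by (rule bp_split[OF bq sm sn])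
  also have "\<dots> = add (st f) (st g)"
  proof -
    have j1: "j1 = st q1" and j2: "j2 = st q2" using o1 o2 E by (simp_all add: hom_iff)
    have a1: "q1 \<cdot> st n = Idm C B" using o1 n E st_comp[of j1 n] by (simp add: hom_iff)
    have a2: "q2 \<cdot> st n = Idm C B" using o2 n E st_comp[of j2 n] by (simp add: hom_iff)
    have b1: "st m \<cdot> j1 = st f" using j1 m E st_comp[of m q1] by (simp add: hom_iff)
    have b2: "st m \<cdot> j2 = st g" using j2 m E st_comp[of m q2] by (simp add: hom_iff)
    show ?thesis using a1 a2 b1 b2 E sm by (simp add: hom_iff)
  qed
  finally show ?thesis .
qed

end


context PH
begin

lemma ker_D:
  assumes "is_kernel C g k"
  shows "g \<in> Ar C" "k \<in> Ar C" "Cod C k = Dom C g" "g \<cdot> k = zero_mor C (Dom C k) (Cod C g)"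
  using assms unfolding is_kernel_def by blast+

lemma ker_U:
  assumes k: "is_kernel C g k" and x: "x \<in> hom C X (Dom C g)" and z: "g \<cdot> x = zero_mor C X (Cod C g)"
  obtains h where "h \<in> hom C X (Dom C k)" "k \<cdot> h = x"
proof -
  have X: "X \<in> Ob C" using x hom_ob by blast
  have "\<forall>X \<in> Ob C. \<forall>g' \<in> hom C X (Dom C g).
        Cmp C g g' = zero_mor C X (Cod C g) \<longrightarrow> (\<exists>!h. h \<in> hom C X (Dom C k) \<and> Cmp C k h = g')"
    using k unfolding is_kernel_def by (elim conjE)
  from this[rule_format, OF X x z] have "\<exists>!h. h \<in> hom C X (Dom C k) \<and> k \<cdot> h = x" .
  then have "\<exists>h. h \<in> hom C X (Dom C k) \<and> k \<cdot> h = x" by (rule ex1_implies_ex)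
  then show ?thesis using that by blast
qed

lemma iso_cancel:
  assumes mm: "st m \<cdot> m = Idm C K" and m: "m \<in> hom C K P" and x: "x \<in> hom C X K" and y: "y \<in> hom C X K"
    and e: "m \<cdot> x = m \<cdot> y"
  shows "x = y"
proof -
  have "x = st m \<cdot> m \<cdot> x" using cont[OF mm m, of _ x] m x by (simp add: hom_iff)
  also have "\<dots> = st m \<cdot> m \<cdot> y" using e by simp
  also have "\<dots> = y" using cont[OF mm m, of _ y] m y by (simp add: hom_iff)
  finally show ?thesis .
qed

lemma ph_R4':
  assumes X: "X \<in> Ob C" and bp: "is_biproduct C X X P s1 r1 s2 r2" and o1: "r1 = st s1" and o2: "r2 = st s2"
    and d: "d \<in> hom C X P" "r1 \<cdot> d = Idm C X" "r2 \<cdot> d = Idm C X"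
  obtains g where "g \<in> Ar C" "is_kernel C g d"
proof -
  have "is_orthonormal_biproduct C X X P s1 r1 s2 r2" unfolding is_orthonormal_biproduct_def
    using bp o1 o2 by (intro conjI)
  then have "\<exists>g. g \<in> Ar C \<and> is_kernel C g d" using ph_R4[rule_format, OF X] d by blast
  then show ?thesis using that by blast
qed

lemma ph_R3':
  assumes "f \<in> Ar C"
  obtains m where "is_kernel C f m" "st m \<cdot> m = Idm C (Dom C m)"
  using ph_R3 assms that by blast


lemma neg_one:
  assumes X: "X \<in> Ob C"
  obtains e where "e \<in> hom C X X" "add (Idm C X) e = zero_mor C X X"
proof -
  obtain P s1 r1 s2 r2 where bp: "is_biproduct C X X P s1 r1 s2 r2" and o1: "r1 = st s1" and o2: "r2 = st s2"
    by (rule bp_ex[OF X X])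
  note D = bp_D[OF bp]
  have s1r: "s1 = st r1" and s2r: "s2 = st r2" using o1 o2 D by (simp_all add: hom_iff)
  have PO: "P \<in> Ob C" using D by simp
  obtain dl where dl: "dl \<in> hom C X P" "r1 \<cdot> dl = Idm C X" "r2 \<cdot> dl = Idm C X"
    using bp_pair[OF bp id_hom[OF X] id_hom[OF X]] by blast
  obtain g where g: "g \<in> Ar C" "is_kernel C g dl" by (rule ph_R4'[OF X bp o1 o2 dl])
  note Kd = ker_D[OF g(2)]
  obtain m where mk: "is_kernel C g m" and mm: "st m \<cdot> m = Idm C (Dom C m)" by (rule ph_R3'[OF g(1)])
  note Km = ker_D[OF mk]
  define K where "K = Dom C m"
  define Y where "Y = Cod C g"
  have m: "m \<in> hom C K P" using Km Kd dl K_def by (simp add: hom_iff)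
  have gh: "g \<in> hom C P Y" using Kd dl g Y_def by (simp add: hom_iff)
  have mm': "st m \<cdot> m = Idm C K" using mm K_def by simp
  have KO: "K \<in> Ob C" and YO: "Y \<in> Ob C" using m gh hom_ob by blast+
  have dlg: "dl \<in> hom C X (Dom C g)" using dl Kd by (simp add: hom_iff)
  have gdl: "g \<cdot> dl = zero_mor C X (Cod C g)" using Kd dl by (simp add: hom_iff)
  obtain u where u: "u \<in> hom C X K" "m \<cdot> u = dl"
    using ker_U[OF mk dlg gdl] K_def by blast
  have mg: "m \<in> hom C K (Dom C g)" using m Kd dl by (simp add: hom_iff)
  have gm: "g \<cdot> m = zero_mor C K (Cod C g)" using Km K_def by simp
  have Ddl: "Dom C dl = X" using dl by (simp add: hom_iff)
  obtain v where v0: "v \<in> hom C K (Dom C dl)" "dl \<cdot> v = m" by (rule ker_U[OF g(2) mg gm])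
  have v: "v \<in> hom C K X" "dl \<cdot> v = m" using v0 Ddl by simp_all
  have uv: "u \<cdot> v = Idm C K"
  proof (rule iso_cancel[OF mm' m])
    show "u \<cdot> v \<in> hom C K K" using u v by (simp add: hom_iff)
    show "Idm C K \<in> hom C K K" using id_hom[OF KO] .
    have "m \<cdot> u \<cdot> v = dl \<cdot> v" using cont[OF u(2) u(1) m, of v] v by (simp add: hom_iff)
    then show "m \<cdot> u \<cdot> v = m \<cdot> Idm C K" using v m by (simp add: hom_iff)
  qed
  have vu: "v \<cdot> u = Idm C X"
  proof -
    have "v \<cdot> u = r1 \<cdot> dl \<cdot> v \<cdot> u" using cont[OF dl(2) dl(1) D(3), of "v \<cdot> u"] u v by (simp add: hom_iff)
    also have "\<dots> = r1 \<cdot> m \<cdot> u" using cont[OF v(2) v(1) dl(1), of u] u by (simp add: hom_iff)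
    also have "\<dots> = Idm C X" using u dl by simp
    finally show ?thesis .
  qed
  have sdl: "st dl \<in> Ar C" using dl by (simp add: hom_iff)
  obtain n where nk: "is_kernel C (st dl) n" and nn: "st n \<cdot> n = Idm C (Dom C n)" by (rule ph_R3'[OF sdl])
  note Kn = ker_D[OF nk]
  define N where "N = Dom C n"
  have n: "n \<in> hom C N P" using Kn dl N_def by (simp add: hom_iff)
  have NO: "N \<in> Ob C" using n hom_ob by blast
  have nn': "st n \<cdot> n = Idm C N" using nn N_def by simp
  have dn: "st dl \<cdot> n = zero_mor C N X" using Kn dl N_def by (simp add: hom_iff)
  have stm: "st m = st v \<cdot> st dl" using v dl st_comp[of v dl] by (simp add: hom_iff)
  have mn: "st m \<cdot> n = zero_mor C N K"
  proof -
    have "st m \<cdot> n = st v \<cdot> st dl \<cdot> n" using stm v dl n by (simp add: hom_iff)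
    also have "\<dots> = zero_mor C N K" using dn v dl n NO by (simp add: hom_iff)
    finally show ?thesis .
  qed
  have nm: "st n \<cdot> m = zero_mor C K N"
  proof -
    have "st (st m \<cdot> n) = st n \<cdot> m" using m n st_comp[of n "st m"] by (simp add: hom_iff)
    then show ?thesis using mn KO NO by simp
  qed
  define c where "c = add (m \<cdot> st m) (n \<cdot> st n)"
  have mst: "m \<cdot> st m \<in> hom C P P" and nst: "n \<cdot> st n \<in> hom C P P" using m n by (simp_all add: hom_iff)
  have c: "c \<in> hom C P P" unfolding c_def using add_hom[OF mst nst] .
  have cm: "c \<cdot> m = m"
  proof -
    have "c \<cdot> m = add ((m \<cdot> st m) \<cdot> m) ((n \<cdot> st n) \<cdot> m)" unfolding c_def by (rule comp_add_r[OF mst nst m])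
    also have "\<dots> = add m (zero_mor C K P)" using m n mm' nm KO NO by (simp add: hom_iff)
    also have "\<dots> = m" by (rule add_zr[OF m])
    finally show ?thesis .
  qed
  have cn: "c \<cdot> n = n"
  proof -
    have "c \<cdot> n = add ((m \<cdot> st m) \<cdot> n) ((n \<cdot> st n) \<cdot> n)" unfolding c_def by (rule comp_add_r[OF mst nst n])
    also have "\<dots> = add (zero_mor C N P) n" using m n nn' mn KO NO by (simp add: hom_iff)
    also have "\<dots> = n" by (rule zr_add[OF n])
    finally show ?thesis .
  qed
  obtain Pp T1 U1 T2 U2 where bpp: "is_biproduct C P P Pp T1 U1 T2 U2" and oT1: "U1 = st T1" and oT2: "U2 = st T2"
    by (rule bp_ex[OF PO PO])
  note E = bp_D[OF bpp]
  obtain dP where dP: "dP \<in> hom C P Pp" "U1 \<cdot> dP = Idm C P" "U2 \<cdot> dP = Idm C P"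
    using bp_pair[OF bpp id_hom[OF PO] id_hom[OF PO]] by blast
  obtain gP where gP: "gP \<in> Ar C" "is_kernel C gP dP" by (rule ph_R4'[OF PO bpp oT1 oT2 dP])
  note KP = ker_D[OF gP(2)]
  define Z where "Z = Cod C gP"
  have gPh: "gP \<in> hom C Pp Z" using KP dP Z_def by (simp add: hom_iff)
  have ZO: "Z \<in> Ob C" using gPh hom_ob by blast
  have gPd: "gP \<cdot> dP = zero_mor C P Z" using KP dP Z_def by (simp add: hom_iff)
  obtain pc where pc: "pc \<in> hom C P Pp" "U1 \<cdot> pc = Idm C P" "U2 \<cdot> pc = c"
    using bp_pair[OF bpp id_hom[OF PO] c] by blast
  define G where "G = gP \<cdot> pc"
  have G: "G \<in> hom C P Z" unfolding G_def using comp_in[OF pc(1) gPh] .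
  have pcm: "pc \<cdot> m = dP \<cdot> m"
  proof (rule bp_pair_uniq[OF bpp])
    show "pc \<cdot> m \<in> hom C K Pp" using comp_in[OF m pc(1)] .
    show "dP \<cdot> m \<in> hom C K Pp" using comp_in[OF m dP(1)] .
    show "U1 \<cdot> pc \<cdot> m = U1 \<cdot> dP \<cdot> m"
      using m E by (simp add: hom_iff cont[OF pc(2) pc(1) E(3)] cont[OF dP(2) dP(1) E(3)])
    show "U2 \<cdot> pc \<cdot> m = U2 \<cdot> dP \<cdot> m"
      using m E cm by (simp add: hom_iff cont[OF pc(3) pc(1) E(5)] cont[OF dP(3) dP(1) E(5)])
  qed
  have pcn: "pc \<cdot> n = dP \<cdot> n"
  proof (rule bp_pair_uniq[OF bpp])
    show "pc \<cdot> n \<in> hom C N Pp" using comp_in[OF n pc(1)] .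
    show "dP \<cdot> n \<in> hom C N Pp" using comp_in[OF n dP(1)] .
    show "U1 \<cdot> pc \<cdot> n = U1 \<cdot> dP \<cdot> n"
      using n E by (simp add: hom_iff cont[OF pc(2) pc(1) E(3)] cont[OF dP(2) dP(1) E(3)])
    show "U2 \<cdot> pc \<cdot> n = U2 \<cdot> dP \<cdot> n"
      using n E cn by (simp add: hom_iff cont[OF pc(3) pc(1) E(5)] cont[OF dP(3) dP(1) E(5)])
  qed
  have Gm: "G \<cdot> m = zero_mor C K Z"
  proof -
    have "G \<cdot> m = gP \<cdot> pc \<cdot> m" unfolding G_def using pc m gPh by (simp add: hom_iff)
    also have "\<dots> = gP \<cdot> dP \<cdot> m" using pcm by simp
    also have "\<dots> = zero_mor C K Z" using cont[OF gPd dP(1) gPh, of m] m ZO by (simp add: hom_iff)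
    finally show ?thesis .
  qed
  have Gn: "G \<cdot> n = zero_mor C N Z"
  proof -
    have "G \<cdot> n = gP \<cdot> pc \<cdot> n" unfolding G_def using pc n gPh by (simp add: hom_iff)
    also have "\<dots> = gP \<cdot> dP \<cdot> n" using pcn by simp
    also have "\<dots> = zero_mor C N Z" using cont[OF gPd dP(1) gPh, of n] n ZO by (simp add: hom_iff)
    finally show ?thesis .
  qed
  have sG: "st G \<in> hom C Z P" using G by (simp add: hom_iff)
  have mG: "st m \<cdot> st G = zero_mor C Z K"
  proof -
    have "st (G \<cdot> m) = st m \<cdot> st G" using G m st_comp[of m G] by (simp add: hom_iff)
    then show ?thesis using Gm KO ZO by simp
  qed
  have stdl: "st dl = st u \<cdot> st m" using u m st_comp[of u m] by (simp add: hom_iff)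
  have dG: "st dl \<cdot> st G = zero_mor C Z X"
  proof -
    have "st dl \<cdot> st G = st u \<cdot> st m \<cdot> st G" using stdl u m sG by (simp add: hom_iff)
    also have "\<dots> = zero_mor C Z X" using mG u ZO by (simp add: hom_iff)
    finally show ?thesis .
  qed
  have sGd: "st G \<in> hom C Z (Dom C (st dl))" using sG dl by (simp add: hom_iff)
  have dG': "st dl \<cdot> st G = zero_mor C Z (Cod C (st dl))" using dG dl by (simp add: hom_iff)
  obtain t where t: "t \<in> hom C Z N" "n \<cdot> t = st G"
    using ker_U[OF nk sGd dG'] N_def by blast
  have nG: "st n \<cdot> st G = zero_mor C Z N"
  proof -
    have "st (G \<cdot> n) = st n \<cdot> st G" using G n st_comp[of n G] by (simp add: hom_iff)
    then show ?thesis using Gn NO ZO by simp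
  qed
  have t0: "t = zero_mor C Z N"
  proof -
    have "t = st n \<cdot> n \<cdot> t" using cont[OF nn' n, of _ t] n t by (simp add: hom_iff)
    also have "\<dots> = zero_mor C Z N" using t(2) nG by simp
    finally show ?thesis .
  qed
  have sG0: "st G = zero_mor C Z P" using t t0 n ZO by (simp add: hom_iff)
  have G0: "G = zero_mor C P Z"
  proof -
    have "G = st (st G)" using G by (simp add: hom_iff)
    also have "\<dots> = zero_mor C P Z" using sG0 PO ZO by simp
    finally show ?thesis .
  qed
  have pcg: "pc \<in> hom C P (Dom C gP)" using pc KP dP by (simp add: hom_iff)
  have gpc: "gP \<cdot> pc = zero_mor C P (Cod C gP)" using G0 G_def Z_def by simp
  have DdP: "Dom C dP = P" using dP by (simp add: hom_iff)
  obtain w where w0: "w \<in> hom C P (Dom C dP)" "dP \<cdot> w = pc" by (rule ker_U[OF gP(2) pcg gpc])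
  have w: "w \<in> hom C P P" "dP \<cdot> w = pc" using w0 DdP by simp_all
  have c1: "c = Idm C P"
  proof -
    have "c = U2 \<cdot> dP \<cdot> w" using pc w by simp
    also have "\<dots> = w" using cont[OF dP(3) dP(1) E(5), of w] w by (simp add: hom_iff)
    also have "\<dots> = U1 \<cdot> dP \<cdot> w" using cont[OF dP(2) dP(1) E(3), of w] w by (simp add: hom_iff)
    also have "\<dots> = Idm C P" using pc w by simp
    finally show ?thesis .
  qed
  have r1m: "r1 \<cdot> m = v" using cont[OF dl(2) dl(1) D(3), of v] v by (simp add: hom_iff)
  have r2m: "r2 \<cdot> m = v" using cont[OF dl(3) dl(1) D(5), of v] v by (simp add: hom_iff)
  have ms2: "st m \<cdot> s2 = st v"
  proof -
    have "st (r2 \<cdot> m) = st m \<cdot> st r2" using m D st_comp[of m r2] by (simp add: hom_iff)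
    then show ?thesis using r2m s2r by simp
  qed
  define E0 where "E0 = r1 \<cdot> n \<cdot> st n \<cdot> s2"
  have E0: "E0 \<in> hom C X X" unfolding E0_def using D n by (simp add: hom_iff)
  have vsv: "v \<cdot> st v \<in> hom C X X" using v by (simp add: hom_iff)
  have z1: "add (v \<cdot> st v) E0 = zero_mor C X X"
  proof -
    have "r1 \<cdot> c \<cdot> s2 = zero_mor C X X" using c1 D by (simp add: hom_iff)
    moreover have "c \<cdot> s2 = add ((m \<cdot> st m) \<cdot> s2) ((n \<cdot> st n) \<cdot> s2)" unfolding c_def
      by (rule comp_add_r[OF mst nst D(4)])
    moreover have "r1 \<cdot> add ((m \<cdot> st m) \<cdot> s2) ((n \<cdot> st n) \<cdot> s2) = add (r1 \<cdot> (m \<cdot> st m) \<cdot> s2) (r1 \<cdot> (n \<cdot> st n) \<cdot> s2)"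
      by (rule comp_add_l) (use m n D in \<open>simp_all add: hom_iff\<close>)
    moreover have "r1 \<cdot> (m \<cdot> st m) \<cdot> s2 = v \<cdot> st v"
      using m D ms2 v cont[OF r1m m D(3)] by (simp add: hom_iff)
    moreover have "r1 \<cdot> (n \<cdot> st n) \<cdot> s2 = E0" unfolding E0_def using n D by (simp add: hom_iff)
    ultimately show ?thesis by simp
  qed
  define q where "q = st u \<cdot> u"
  have q: "q \<in> hom C X X" unfolding q_def using u by (simp add: hom_iff)
  have svsu: "st v \<cdot> st u = Idm C K"
  proof -
    have "st (u \<cdot> v) = st v \<cdot> st u" using u v st_comp[of v u] by (simp add: hom_iff)
    then show ?thesis using uv KO by simp
  qed
  have "add (v \<cdot> st v) E0 \<cdot> q = add ((v \<cdot> st v) \<cdot> q) (E0 \<cdot> q)" by (rule comp_add_r[OF vsv E0 q])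
  moreover have "(v \<cdot> st v) \<cdot> q = Idm C X"
  proof -
    have "(v \<cdot> st v) \<cdot> q = v \<cdot> (st v \<cdot> st u) \<cdot> u" unfolding q_def using u v by (simp add: hom_iff)
    also have "\<dots> = Idm C X" using svsu vu u by (simp add: hom_iff)
    finally show ?thesis .
  qed
  moreover have "zero_mor C X X \<cdot> q = zero_mor C X X" using q X by (simp add: hom_iff)
  ultimately have "add (Idm C X) (E0 \<cdot> q) = zero_mor C X X" using z1 by simp
  moreover have "E0 \<cdot> q \<in> hom C X X" using comp_in[OF q E0] .
  ultimately show ?thesis using that by blast
qed

end


context PH
begin

lemma neg_ex:
  assumes f: "f \<in> hom C A B"
  shows "\<exists>f'. f' \<in> hom C A B \<and> add f f' = zero_mor C A B"
proof -
  have A: "A \<in> Ob C" and B: "B \<in> Ob C" using f hom_ob by blast+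
  obtain e where e: "e \<in> hom C B B" "add (Idm C B) e = zero_mor C B B" by (rule neg_one[OF B])
  have "add (Idm C B) e \<cdot> f = add (Idm C B \<cdot> f) (e \<cdot> f)" by (rule comp_add_r[OF id_hom[OF B] e(1) f])
  then have "add f (e \<cdot> f) = zero_mor C A B" using e f A B by (simp add: hom_iff)
  moreover have "e \<cdot> f \<in> hom C A B" using comp_in[OF f e(1)] .
  ultimately show ?thesis by blast
qed

definition neg where
  "neg f = (SOME f'. f' \<in> hom C (Dom C f) (Cod C f) \<and> add f f' = zero_mor C (Dom C f) (Cod C f))"

lemma neg_prop:
  assumes f: "f \<in> hom C A B"
  shows "neg f \<in> hom C A B" "add f (neg f) = zero_mor C A B"
proof -
  have DC: "Dom C f = A" "Cod C f = B" using f by (simp_all add: hom_iff)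
  have "\<exists>f'. f' \<in> hom C (Dom C f) (Cod C f) \<and> add f f' = zero_mor C (Dom C f) (Cod C f)"
    using neg_ex[OF f] DC by simp
  from someI_ex[OF this] have "neg f \<in> hom C (Dom C f) (Cod C f) \<and> add f (neg f) = zero_mor C (Dom C f) (Cod C f)"
    unfolding neg_def .
  then show "neg f \<in> hom C A B" "add f (neg f) = zero_mor C A B" using DC by simp_all
qed

lemma neg_add:
  assumes f: "f \<in> hom C A B"
  shows "add (neg f) f = zero_mor C A B"
  using add_comm[OF neg_prop(1)[OF f] f] neg_prop(2)[OF f] by simp

lemma add_cancel:
  assumes f: "f \<in> hom C A B" and x: "x \<in> hom C A B" and y: "y \<in> hom C A B" and e: "add f x = add f y"
  shows "x = y"
proof -
  have "x = add (add (neg f) f) x" using neg_add[OF f] zr_add[OF x] by simp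
  also have "\<dots> = add (neg f) (add f x)" by (rule add_assoc[OF neg_prop(1)[OF f] f x])
  also have "\<dots> = add (neg f) (add f y)" using e by simp
  also have "\<dots> = add (add (neg f) f) y" by (rule add_assoc[OF neg_prop(1)[OF f] f y, symmetric])
  also have "\<dots> = y" using neg_add[OF f] zr_add[OF y] by simp
  finally show ?thesis .
qed

lemma neg_uniq:
  assumes f: "f \<in> hom C A B" and g: "g \<in> hom C A B" and e: "add f g = zero_mor C A B"
  shows "neg f = g"
  using add_cancel[OF f neg_prop(1)[OF f] g] neg_prop(2)[OF f] e by simp

lemma comp_neg_l:
  assumes f: "f \<in> hom C A B" and k: "k \<in> hom C B B'"
  shows "k \<cdot> neg f = neg (k \<cdot> f)"
proof -
  have A: "A \<in> Ob C" and B': "B' \<in> Ob C" using f k hom_ob by blast+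
  have "add (k \<cdot> f) (k \<cdot> neg f) = k \<cdot> add f (neg f)" by (rule comp_add_l[OF f neg_prop(1)[OF f] k, symmetric])
  also have "\<dots> = zero_mor C A B'" using neg_prop(2)[OF f] k A by (simp add: hom_iff)
  finally show ?thesis using neg_uniq[OF comp_in[OF f k] comp_in[OF neg_prop(1)[OF f] k]] by simp
qed

lemma comp_neg_r:
  assumes f: "f \<in> hom C A B" and k: "k \<in> hom C A' A"
  shows "neg f \<cdot> k = neg (f \<cdot> k)"
proof -
  have A': "A' \<in> Ob C" and B: "B \<in> Ob C" using f k hom_ob by blast+
  have "add (f \<cdot> k) (neg f \<cdot> k) = add f (neg f) \<cdot> k" by (rule comp_add_r[OF f neg_prop(1)[OF f] k, symmetric])
  also have "\<dots> = zero_mor C A' B" using neg_prop(2)[OF f] k B by (simp add: hom_iff)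
  finally show ?thesis using neg_uniq[OF comp_in[OF k f] comp_in[OF k neg_prop(1)[OF f]]] by simp
qed

lemma st_neg:
  assumes f: "f \<in> hom C A B"
  shows "st (neg f) = neg (st f)"
proof -
  have A: "A \<in> Ob C" and B: "B \<in> Ob C" using f hom_ob by blast+
  have sf: "st f \<in> hom C B A" and snf: "st (neg f) \<in> hom C B A" using f neg_prop(1)[OF f] by (simp_all add: hom_iff)
  have "add (st f) (st (neg f)) = st (add f (neg f))" by (rule st_add[OF f neg_prop(1)[OF f], symmetric])
  also have "\<dots> = zero_mor C B A" using neg_prop(2)[OF f] A B by simp
  finally show ?thesis using neg_uniq[OF sf snf] by simp
qed

lemma neg_zr:
  assumes A: "A \<in> Ob C" and B: "B \<in> Ob C"
  shows "neg (zero_mor C A B) = zero_mor C A B"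
  using neg_uniq[OF zr_hom[OF A B] zr_hom[OF A B]] add_zr[OF zr_hom[OF A B]] by simp

lemma grp1:
  assumes i: "i \<in> hom C A B" and u: "u \<in> hom C A B" and v: "v \<in> hom C A B"
  shows "add (add i (neg u)) (add (add v u) (neg v)) = i"
proof -
  have "add (add v u) (neg v) = add (add u v) (neg v)" using add_comm[OF v u] by simp
  also have "\<dots> = add u (add v (neg v))" by (rule add_assoc[OF u v neg_prop(1)[OF v]])
  also have "\<dots> = u" using neg_prop(2)[OF v] add_zr[OF u] by simp
  finally have e: "add (add v u) (neg v) = u" .
  have "add (add i (neg u)) u = add i (add (neg u) u)" by (rule add_assoc[OF i neg_prop(1)[OF u] u])
  also have "\<dots> = i" using neg_add[OF u] add_zr[OF i] by simp
  finally show ?thesis using e by simp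
qed

lemma grp2:
  assumes d: "d \<in> hom C A B" and b: "b \<in> hom C A B"
  shows "add d (add b (neg d)) = b"
proof -
  have "add d (add b (neg d)) = add d (add (neg d) b)" using add_comm[OF b neg_prop(1)[OF d]] by simp
  also have "\<dots> = add (add d (neg d)) b" by (rule add_assoc[OF d neg_prop(1)[OF d] b, symmetric])
  also have "\<dots> = b" using neg_prop(2)[OF d] zr_add[OF b] by simp
  finally show ?thesis .
qed

end


context PH
begin

lemma inv_herm:
  assumes a: "a \<in> hom C A A" and sa: "st a = a" and ai: "ai \<in> hom C A A" "a \<cdot> ai = Idm C A" "ai \<cdot> a = Idm C A"
  shows "st ai = ai"
proof -
  have AO: "A \<in> Ob C" using a hom_ob by blast
  have "st (a \<cdot> ai) = st ai \<cdot> st a" using a ai st_comp[of ai a] by (simp add: hom_iff)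
  then have e1: "st ai \<cdot> a = Idm C A" using ai(2) sa AO by simp
  have "st ai = st ai \<cdot> (a \<cdot> ai)" using ai by (simp add: hom_iff)
  also have "\<dots> = (st ai \<cdot> a) \<cdot> ai" using ai a by (simp add: hom_iff)
  also have "\<dots> = ai" using e1 ai by (simp add: hom_iff)
  finally show ?thesis .
qed

lemma dir_le:
  assumes AO: "A \<in> Ob C" and BO: "B \<in> Ob C" and f: "f \<in> hom C A B" and a: "a \<in> hom C A A" and b: "b \<in> hom C B B"
    and sa: "st a = a" and sb: "st b = b"
    and ai: "ai \<in> hom C A A" "a \<cdot> ai = Idm C A" "ai \<cdot> a = Idm C A"
    and bi: "bi \<in> hom C B B" "b \<cdot> bi = Idm C B" "bi \<cdot> b = Idm C B"
    and w: "W \<in> Ob C" "w \<in> hom C B W" "st w \<cdot> w = b"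
    and y: "Y \<in> Ob C" "y \<in> hom C A Y" "a = add (st f \<cdot> bi \<cdot> f) (st y \<cdot> y)"
  shows "\<exists>P\<in>Ob C. \<exists>z\<in>hom C B P. b = add (f \<cdot> ai \<cdot> st f) (st z \<cdot> z)"
proof -
  have sai: "st ai = ai" by (rule inv_herm[OF a sa ai])
  have sbi: "st bi = bi" by (rule inv_herm[OF b sb bi])
  obtain P s1 r1 s2 r2 where bp: "is_biproduct C Y W P s1 r1 s2 r2" and o1: "r1 = st s1" and o2: "r2 = st s2"
    by (rule bp_ex[OF y(1) w(1)])
  note D = bp_D[OF bp]
  have s1r: "s1 = st r1" and s2r: "s2 = st r2" using o1 o2 D by (simp_all add: hom_iff)
  have PO: "P \<in> Ob C" using D by simp
  have sy: "s1 \<cdot> y \<in> hom C A P" using y D by (simp add: hom_iff)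
  have sw: "s2 \<cdot> w \<cdot> bi \<cdot> f \<in> hom C A P" using w D bi f by (simp add: hom_iff)
  define Z1 where "Z1 = add (s1 \<cdot> y) (s2 \<cdot> w \<cdot> bi \<cdot> f)"
  define Z2 where "Z2 = s2 \<cdot> w"
  have Z1: "Z1 \<in> hom C A P" unfolding Z1_def by (rule add_hom[OF sy sw])
  have Z2: "Z2 \<in> hom C B P" unfolding Z2_def using w D by (simp add: hom_iff)
  have r1Z1: "r1 \<cdot> Z1 = y"
  proof -
    have "r1 \<cdot> Z1 = add (r1 \<cdot> s1 \<cdot> y) (r1 \<cdot> s2 \<cdot> w \<cdot> bi \<cdot> f)" unfolding Z1_def by (rule comp_add_l[OF sy sw D(3)])
    also have "\<dots> = add y (zero_mor C A Y)"
      using y w bi f D AO by (simp add: hom_iff cont[OF D(6) D(2) D(3)] cont[OF D(9) D(4) D(3)])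
    also have "\<dots> = y" by (rule add_zr[OF y(2)])
    finally show ?thesis .
  qed
  have r2Z1: "r2 \<cdot> Z1 = w \<cdot> bi \<cdot> f"
  proof -
    have "r2 \<cdot> Z1 = add (r2 \<cdot> s1 \<cdot> y) (r2 \<cdot> s2 \<cdot> w \<cdot> bi \<cdot> f)" unfolding Z1_def by (rule comp_add_l[OF sy sw D(5)])
    also have "\<dots> = add (zero_mor C A W) (w \<cdot> bi \<cdot> f)"
      using y w bi f D AO by (simp add: hom_iff cont[OF D(8) D(2) D(5)] cont[OF D(7) D(4) D(5)])
    also have "\<dots> = w \<cdot> bi \<cdot> f" by (rule zr_add) (use w bi f in \<open>simp add: hom_iff\<close>)
    finally show ?thesis .
  qed
  have Z1s1: "st Z1 \<cdot> s1 = st y"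
  proof -
    have "st (r1 \<cdot> Z1) = st Z1 \<cdot> st r1" using Z1 D st_comp[of Z1 r1] by (simp add: hom_iff)
    then show ?thesis using r1Z1 s1r by simp
  qed
  have Z1s2: "st Z1 \<cdot> s2 = st f \<cdot> bi \<cdot> st w"
  proof -
    have "st (r2 \<cdot> Z1) = st Z1 \<cdot> st r2" using Z1 D st_comp[of Z1 r2] by (simp add: hom_iff)
    moreover have "st (w \<cdot> bi \<cdot> f) = st f \<cdot> bi \<cdot> st w" using w bi f sbi by (simp add: hom_iff)
    ultimately show ?thesis using r2Z1 s2r by simp
  qed
  have sZ1: "st Z1 \<in> hom C P A" using Z1 by (simp add: hom_iff)
  have wwb: "\<And>x. x \<in> Ar C \<Longrightarrow> Cod C x = B \<Longrightarrow> st w \<cdot> w \<cdot> x = b \<cdot> x"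
    using cont[OF w(3) w(2)] w by (simp add: hom_iff)
  have bbi: "\<And>x. x \<in> Ar C \<Longrightarrow> Cod C x = B \<Longrightarrow> b \<cdot> bi \<cdot> x = x"
    using cont[OF bi(2) bi(1) b] BO by simp
  have ZZ11: "st Z1 \<cdot> Z1 = a"
  proof -
    have "st Z1 \<cdot> Z1 = add (st Z1 \<cdot> s1 \<cdot> y) (st Z1 \<cdot> s2 \<cdot> w \<cdot> bi \<cdot> f)"
      by (rule comp_add_l[OF sy sw sZ1, folded Z1_def])
    also have "\<dots> = add (st y \<cdot> y) (st f \<cdot> bi \<cdot> f)"
      using y w bi f D sZ1 wwb bbi by (simp add: hom_iff cont[OF Z1s1 D(2) sZ1] cont[OF Z1s2 D(4) sZ1])
    also have "\<dots> = a" using y(3) add_comm[of "st y \<cdot> y" A A "st f \<cdot> bi \<cdot> f"] y f bi by (simp add: hom_iff)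
    finally show ?thesis .
  qed
  have ZZ12: "st Z1 \<cdot> Z2 = st f"
  proof -
    have "st Z1 \<cdot> Z2 = st f \<cdot> bi \<cdot> st w \<cdot> w" unfolding Z2_def
      using cont[OF Z1s2 D(4) sZ1, of w] w bi f by (simp add: hom_iff)
    also have "\<dots> = st f" using w(3) bi f by (simp add: hom_iff)
    finally show ?thesis .
  qed
  have ZZ22: "st Z2 \<cdot> Z2 = b"
  proof -
    have "st Z2 \<cdot> Z2 = st w \<cdot> r2 \<cdot> s2 \<cdot> w" unfolding Z2_def using w D o2 by (simp add: hom_iff)
    also have "\<dots> = b" using w D by (simp add: hom_iff cont[OF D(7) D(4) D(5)])
    finally show ?thesis .
  qed
  have ZZ21: "st Z2 \<cdot> Z1 = f"
  proof -
    have "st (st Z1 \<cdot> Z2) = st Z2 \<cdot> Z1" using Z1 Z2 st_comp[of Z2 "st Z1"] by (simp add: hom_iff)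
    then show ?thesis using ZZ12 f by (simp add: hom_iff)
  qed
  define t where "t = Z1 \<cdot> ai \<cdot> st f"
  define d where "d = f \<cdot> ai \<cdot> st f"
  have t: "t \<in> hom C B P" unfolding t_def using Z1 ai f by (simp add: hom_iff)
  have d: "d \<in> hom C B B" unfolding d_def using ai f by (simp add: hom_iff)
  have st_t: "st t = f \<cdot> ai \<cdot> st Z1" unfolding t_def using Z1 ai f sai by (simp add: hom_iff)
  have sZ2: "st Z2 \<in> hom C P B" using Z2 by (simp add: hom_iff)
  have stt: "st t \<in> hom C P B" using t by (simp add: hom_iff)
  have Z2t: "st Z2 \<cdot> t = d" unfolding t_def d_def
    using cont[OF ZZ21 Z1 sZ2] ai f by (simp add: hom_iff)
  have tZ2: "st t \<cdot> Z2 = d" unfolding st_t d_def using ZZ12 ai f Z1 Z2 by (simp add: hom_iff)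
  have tt: "st t \<cdot> t = d" unfolding st_t d_def t_def
    using cont[OF ZZ11 Z1 sZ1] cont[OF ai(3) a ai(1)] ai f Z1 sai by (simp add: hom_iff)
  define z where "z = add Z2 (neg t)"
  have nt: "neg t \<in> hom C B P" by (rule neg_prop(1)[OF t])
  have z: "z \<in> hom C B P" unfolding z_def by (rule add_hom[OF Z2 nt])
  have sz: "st z = add (st Z2) (neg (st t))" unfolding z_def using st_add[OF Z2 nt] st_neg[OF t] by simp
  have nst: "neg (st t) \<in> hom C P B" by (rule neg_prop(1)[OF stt])
  have nd: "neg d \<in> hom C B B" by (rule neg_prop(1)[OF d])
  have e1: "st Z2 \<cdot> z = add b (neg d)"
  proof -
    have "st Z2 \<cdot> z = add (st Z2 \<cdot> Z2) (st Z2 \<cdot> neg t)" unfolding z_def by (rule comp_add_l[OF Z2 nt sZ2])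
    also have "\<dots> = add b (neg d)" using ZZ22 comp_neg_l[OF t sZ2] Z2t by simp
    finally show ?thesis .
  qed
  have e2: "neg (st t) \<cdot> z = zero_mor C B B"
  proof -
    have "neg (st t) \<cdot> z = neg (st t \<cdot> z)" by (rule comp_neg_r[OF stt z])
    also have "st t \<cdot> z = add (st t \<cdot> Z2) (st t \<cdot> neg t)" unfolding z_def by (rule comp_add_l[OF Z2 nt stt])
    also have "\<dots> = add d (neg d)" using tZ2 comp_neg_l[OF t stt] tt by simp
    also have "\<dots> = zero_mor C B B" by (rule neg_prop(2)[OF d])
    finally show ?thesis using neg_zr[OF BO BO] by simp
  qed
  have "st z \<cdot> z = add (st Z2 \<cdot> z) (neg (st t) \<cdot> z)" unfolding sz by (rule comp_add_r[OF sZ2 nst z])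
  also have "\<dots> = add b (neg d)" using e1 e2 add_zr[OF add_hom[OF b nd]] by simp
  finally have zz: "st z \<cdot> z = add b (neg d)" .
  have "b = add d (st z \<cdot> z)" using zz grp2[OF d b] by simp
  then show ?thesis using PO z d_def by blast
qed


lemma dir_less:
  assumes AO: "A \<in> Ob C" and BO: "B \<in> Ob C" and f: "f \<in> hom C A B" and a: "a \<in> hom C A A" and b: "b \<in> hom C B B"
    and sa: "st a = a" and sb: "st b = b"
    and ai: "ai \<in> hom C A A" "a \<cdot> ai = Idm C A" "ai \<cdot> a = Idm C A"
    and bi: "bi \<in> hom C B B" "b \<cdot> bi = Idm C B" "bi \<cdot> b = Idm C B"
    and p: "p \<in> hom C A A" "a = add (st f \<cdot> bi \<cdot> f) p"
    and pi: "pi \<in> hom C A A" "p \<cdot> pi = Idm C A" "pi \<cdot> p = Idm C A"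
  shows "\<exists>e\<in>hom C B B. b = add (f \<cdot> ai \<cdot> st f) e \<and> invertible C e"
proof -
  have sai: "st ai = ai" by (rule inv_herm[OF a sa ai])
  have sbi: "st bi = bi" by (rule inv_herm[OF b sb bi])
  define c where "c = st f \<cdot> bi \<cdot> f"
  define d where "d = f \<cdot> ai \<cdot> st f"
  define g where "g = st f \<cdot> bi"
  have c: "c \<in> hom C A A" unfolding c_def using f bi by (simp add: hom_iff)
  have d: "d \<in> hom C B B" unfolding d_def using f ai by (simp add: hom_iff)
  have g: "g \<in> hom C B A" unfolding g_def using f bi by (simp add: hom_iff)
  have nd: "neg d \<in> hom C B B" by (rule neg_prop(1)[OF d])
  define e where "e = add b (neg d)"
  have e: "e \<in> hom C B B" unfolding e_def by (rule add_hom[OF b nd])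
  have bde: "b = add d e" unfolding e_def using grp2[OF d b] by simp
  define k where "k = bi \<cdot> f \<cdot> pi \<cdot> g"
  have k: "k \<in> hom C B B" unfolding k_def using bi f pi g by (simp add: hom_iff)
  define x where "x = add bi k"
  have x: "x \<in> hom C B B" unfolding x_def by (rule add_hom[OF bi(1) k])
  have cpi: "c \<cdot> pi \<in> hom C A A" using c pi by (simp add: hom_iff)
  have aicpi: "ai \<cdot> c \<cdot> pi \<in> hom C A A" using c pi ai by (simp add: hom_iff)
  have pi_eq: "pi = add (ai \<cdot> c \<cdot> pi) ai"
  proof -
    have "a \<cdot> pi = add c p \<cdot> pi" using p(2) c_def by simp
    also have "\<dots> = add (c \<cdot> pi) (p \<cdot> pi)" by (rule comp_add_r[OF c p(1) pi(1)])
    finally have api: "a \<cdot> pi = add (c \<cdot> pi) (Idm C A)" using pi by simp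
    have "pi = ai \<cdot> a \<cdot> pi" using cont[OF ai(3) a ai(1), of pi] pi by (simp add: hom_iff)
    also have "\<dots> = ai \<cdot> add (c \<cdot> pi) (Idm C A)" using api by simp
    also have "\<dots> = add (ai \<cdot> c \<cdot> pi) (ai \<cdot> Idm C A)" by (rule comp_add_l[OF cpi id_hom[OF AO] ai(1)])
    also have "\<dots> = add (ai \<cdot> c \<cdot> pi) ai" using ai by (simp add: hom_iff)
    finally show ?thesis .
  qed
  define U where "U = f \<cdot> ai \<cdot> g"
  define V where "V = f \<cdot> ai \<cdot> c \<cdot> pi \<cdot> g"
  have U: "U \<in> hom C B B" unfolding U_def using f ai g by (simp add: hom_iff)
  have V: "V \<in> hom C B B" unfolding V_def using f ai g c pi by (simp add: hom_iff)
  have piW: "f \<cdot> pi \<cdot> g = add V U"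
  proof -
    have "pi \<cdot> g = add (ai \<cdot> c \<cdot> pi) ai \<cdot> g" using pi_eq by (rule arg_cong)
    also have "\<dots> = add ((ai \<cdot> c \<cdot> pi) \<cdot> g) (ai \<cdot> g)" by (rule comp_add_r[OF aicpi ai(1) g])
    also have "\<dots> = add (ai \<cdot> c \<cdot> pi \<cdot> g) (ai \<cdot> g)" using ai c pi g by (simp add: hom_iff)
    finally have e1: "pi \<cdot> g = add (ai \<cdot> c \<cdot> pi \<cdot> g) (ai \<cdot> g)" .
    have h1: "ai \<cdot> c \<cdot> pi \<cdot> g \<in> hom C B A" using ai c pi g by (simp add: hom_iff)
    have h2: "ai \<cdot> g \<in> hom C B A" using ai g by (simp add: hom_iff)
    have "f \<cdot> pi \<cdot> g = f \<cdot> add (ai \<cdot> c \<cdot> pi \<cdot> g) (ai \<cdot> g)" using e1 by simp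
    also have "\<dots> = add V U" unfolding U_def V_def by (rule comp_add_l[OF h1 h2 f])
    finally show ?thesis .
  qed
  have h1: "e \<cdot> bi = add (Idm C B) (neg U)"
  proof -
    have "e \<cdot> bi = add (b \<cdot> bi) (neg d \<cdot> bi)" unfolding e_def by (rule comp_add_r[OF b nd bi(1)])
    also have "\<dots> = add (Idm C B) (neg (d \<cdot> bi))" using bi(2) comp_neg_r[OF d bi(1)] by simp
    also have "d \<cdot> bi = U" unfolding d_def U_def g_def using f ai bi by (simp add: hom_iff)
    finally show ?thesis .
  qed
  have h2: "e \<cdot> k = add (add V U) (neg V)"
  proof -
    have "e \<cdot> k = add (b \<cdot> k) (neg d \<cdot> k)" unfolding e_def by (rule comp_add_r[OF b nd k])
    also have "\<dots> = add (b \<cdot> k) (neg (d \<cdot> k))" using comp_neg_r[OF d k] by simp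
    also have "b \<cdot> k = f \<cdot> pi \<cdot> g" unfolding k_def
      using cont[OF bi(2) bi(1) b, of "f \<cdot> pi \<cdot> g"] f pi g BO by (simp add: hom_iff)
    also have "d \<cdot> k = V" unfolding d_def k_def V_def c_def using f ai bi pi g by (simp add: hom_iff)
    finally show ?thesis using piW by simp
  qed
  have ex: "e \<cdot> x = Idm C B"
  proof -
    have "e \<cdot> x = add (e \<cdot> bi) (e \<cdot> k)" unfolding x_def by (rule comp_add_l[OF bi(1) k e])
    also have "\<dots> = Idm C B" using h1 h2 grp1[OF id_hom[OF BO] U V] by simp
    finally show ?thesis .
  qed
  have sd: "st d = d" unfolding d_def using f ai sai by (simp add: hom_iff)
  have se: "st e = e" unfolding e_def using st_add[OF b nd] st_neg[OF d] sb sd by simp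
  have xe0: "st x \<cdot> e = Idm C B"
  proof -
    have "st (e \<cdot> x) = st x \<cdot> st e" using e x st_comp[of x e] by (simp add: hom_iff)
    then show ?thesis using ex se BO by simp
  qed
  have sx: "st x = x"
  proof -
    have "st x = st x \<cdot> (e \<cdot> x)" using ex x by (simp add: hom_iff)
    also have "\<dots> = (st x \<cdot> e) \<cdot> x" using e x by (simp add: hom_iff)
    also have "\<dots> = x" using xe0 x by (simp add: hom_iff)
    finally show ?thesis .
  qed
  have xe: "x \<cdot> e = Idm C B" using xe0 sx by simp
  have inv: "invertible C e" unfolding invertible_def using e x xe ex by blast
  show ?thesis using e bde inv d_def by blast
qed

lemma herm_iff:
  assumes c: "c \<in> hom C A A"
  shows "hermitian C c \<longleftrightarrow> st c = c"
  unfolding hermitian_def using c hom_ob(1)[OF c] by blast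

lemma herm_le_char:
  assumes c: "c \<in> hom C A A" and d: "d \<in> hom C A A"
  shows "herm_le C c d \<longleftrightarrow> st c = c \<and> st d = d \<and> (\<exists>Y\<in>Ob C. \<exists>y\<in>hom C A Y. d = add c (st y \<cdot> y))"
proof -
  have Dc: "Dom C c = A" and Dd: "Dom C d = A" using c d by (simp_all add: hom_iff)
  have ms: "mor_sum C c (st y \<cdot> y) d \<longleftrightarrow> d = add c (st y \<cdot> y)" if y: "y \<in> hom C A Y" for y Y
  proof
    assume "mor_sum C c (st y \<cdot> y) d" then show "d = add c (st y \<cdot> y)" using sum_add by simp
  next
    have yy: "st y \<cdot> y \<in> hom C A A" using y by (simp add: hom_iff)
    assume "d = add c (st y \<cdot> y)" then show "mor_sum C c (st y \<cdot> y) d" using sum_ex[OF c yy] by simp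
  qed
  show ?thesis unfolding herm_le_def herm_iff[OF c] herm_iff[OF d] Dc Dd using ms by blast
qed

lemma herm_less_char:
  assumes c: "c \<in> hom C A A" and d: "d \<in> hom C A A"
  shows "herm_less C c d \<longleftrightarrow> herm_le C c d \<and> (\<exists>e\<in>hom C A A. d = add c e \<and> invertible C e)"
proof -
  have "mor_sum C c e d \<longleftrightarrow> e \<in> hom C A A \<and> d = add c e" for e
  proof
    assume H: "mor_sum C c e d"
    obtain A' B' Q j1 q1 j2 q2 m n where HH: "A' \<in> Ob C" "B' \<in> Ob C" "c \<in> hom C A' B'" "e \<in> hom C A' B'"
      "is_biproduct C B' B' Q j1 q1 j2 q2" "m \<in> hom C A' Q" "n \<in> hom C Q B'" "q1 \<cdot> m = c" "q2 \<cdot> m = e"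
      "n \<cdot> j1 = Idm C B'" "n \<cdot> j2 = Idm C B'" "d = n \<cdot> m" by (rule sum_D[OF H])
    have "A' = A" "B' = A" using c HH(3) unfolding hom_iff by auto
    then show "e \<in> hom C A A \<and> d = add c e" using HH(4) sum_add[OF H] by simp
  next
    assume H: "e \<in> hom C A A \<and> d = add c e"
    then show "mor_sum C c e d" using sum_ex[OF c] by simp
  qed
  then show ?thesis unfolding herm_less_def by blast
qed

lemma inv_unique:
  assumes e: "e \<in> hom C A B" and g: "g \<in> hom C B A" and ge: "g \<cdot> e = Idm C A" and eg: "e \<cdot> g = Idm C B"
  shows "inverse_mor C e = g"
  unfolding inverse_mor_def
proof (rule the_equality)
  show "\<exists>A B. e \<in> hom C A B \<and> g \<in> hom C B A \<and> g \<cdot> e = Idm C A \<and> e \<cdot> g = Idm C B" using assms by blast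
  fix g' assume "\<exists>A' B'. e \<in> hom C A' B' \<and> g' \<in> hom C B' A' \<and> g' \<cdot> e = Idm C A' \<and> e \<cdot> g' = Idm C B'"
  then obtain A' B' where H: "e \<in> hom C A' B'" "g' \<in> hom C B' A'" "g' \<cdot> e = Idm C A'" "e \<cdot> g' = Idm C B'" by blast
  have AB: "A' = A" "B' = B" using e H(1) unfolding hom_iff by auto
  have g': "g' \<in> hom C B A" using H(2) AB by simp
  have "g' = g' \<cdot> (e \<cdot> g)" using eg g' by (simp add: hom_iff)
  also have "\<dots> = (g' \<cdot> e) \<cdot> g" using g' e g by (simp add: hom_iff)
  also have "\<dots> = g" using H(3) AB g by (simp add: hom_iff)
  finally show "g' = g" .
qed

lemma invertible_D:
  assumes e: "e \<in> hom C A B" and inv: "invertible C e"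
  obtains g where "g \<in> hom C B A" "g \<cdot> e = Idm C A" "e \<cdot> g = Idm C B"
proof -
  obtain A' B' g where H: "e \<in> hom C A' B'" "g \<in> hom C B' A'" "g \<cdot> e = Idm C A'" "e \<cdot> g = Idm C B'"
    using inv unfolding invertible_def by blast
  have AB: "A' = A" "B' = B" using e H(1) unfolding hom_iff by auto
  show ?thesis using that H AB by simp
qed

lemma pos_D:
  assumes a: "a \<in> hom C A A" and h: "herm_less C (zero_mor C A A) a"
  obtains W w where "st a = a" "W \<in> Ob C" "w \<in> hom C A W" "st w \<cdot> w = a"
    "inverse_mor C a \<in> hom C A A" "a \<cdot> inverse_mor C a = Idm C A" "inverse_mor C a \<cdot> a = Idm C A"
proof -
  have AO: "A \<in> Ob C" using a hom_ob by blast
  have z: "zero_mor C A A \<in> hom C A A" by (rule zr_hom[OF AO AO])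
  from h have H1: "herm_le C (zero_mor C A A) a" and H2: "\<exists>e\<in>hom C A A. a = add (zero_mor C A A) e \<and> invertible C e"
    using herm_less_char[OF z a] by blast+
  from H1 obtain W w where sa: "st a = a" and W: "W \<in> Ob C" and w: "w \<in> hom C A W"
    and aw: "a = add (zero_mor C A A) (st w \<cdot> w)"
    using herm_le_char[OF z a] by blast
  have ww: "st w \<cdot> w \<in> hom C A A" using w by (simp add: hom_iff)
  have aw': "st w \<cdot> w = a" using aw zr_add[OF ww] by simp
  from H2 obtain e where e: "e \<in> hom C A A" "a = add (zero_mor C A A) e" "invertible C e" by blast
  have ea: "e = a" using e(2) zr_add[OF e(1)] by simp
  obtain g where g: "g \<in> hom C A A" "g \<cdot> a = Idm C A" "a \<cdot> g = Idm C A"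
    using invertible_D[OF a] e(3) ea by blast
  have ig: "inverse_mor C a = g" by (rule inv_unique[OF a g(1) g(2) g(3)])
  show ?thesis by (rule that[OF sa W w aw']) (use ig g in simp_all)
qed

lemma one_dir:
  assumes AO: "A \<in> Ob C" and BO: "B \<in> Ob C" and f: "f \<in> hom C A B" and a: "a \<in> hom C A A" and b: "b \<in> hom C B B"
    and sa: "st a = a" and sb: "st b = b"
    and ai: "ai \<in> hom C A A" "a \<cdot> ai = Idm C A" "ai \<cdot> a = Idm C A"
    and bi: "bi \<in> hom C B B" "b \<cdot> bi = Idm C B" "bi \<cdot> b = Idm C B"
    and w: "W \<in> Ob C" "w \<in> hom C B W" "st w \<cdot> w = b"
  shows "herm_le C (st f \<cdot> bi \<cdot> f) a \<Longrightarrow> herm_le C (f \<cdot> ai \<cdot> st f) b"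
    and "herm_less C (st f \<cdot> bi \<cdot> f) a \<Longrightarrow> herm_less C (f \<cdot> ai \<cdot> st f) b"
proof -
  have sai: "st ai = ai" by (rule inv_herm[OF a sa ai])
  have sbi: "st bi = bi" by (rule inv_herm[OF b sb bi])
  have c: "st f \<cdot> bi \<cdot> f \<in> hom C A A" using f bi by (simp add: hom_iff)
  have d: "f \<cdot> ai \<cdot> st f \<in> hom C B B" using f ai by (simp add: hom_iff)
  have sd: "st (f \<cdot> ai \<cdot> st f) = f \<cdot> ai \<cdot> st f" using f ai sai by (simp add: hom_iff)
  show le: "herm_le C (f \<cdot> ai \<cdot> st f) b" if H: "herm_le C (st f \<cdot> bi \<cdot> f) a"
  proof -
    obtain Y y where Y: "Y \<in> Ob C" "y \<in> hom C A Y" "a = add (st f \<cdot> bi \<cdot> f) (st y \<cdot> y)"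
      using H herm_le_char[OF c a] by blast
    have "\<exists>P\<in>Ob C. \<exists>z\<in>hom C B P. b = add (f \<cdot> ai \<cdot> st f) (st z \<cdot> z)"
      by (rule dir_le[OF AO BO f a b sa sb ai bi w Y])
    then show ?thesis using herm_le_char[OF d b] sd sb by blast
  qed
  show "herm_less C (f \<cdot> ai \<cdot> st f) b" if H: "herm_less C (st f \<cdot> bi \<cdot> f) a"
  proof -
    have H1: "herm_le C (st f \<cdot> bi \<cdot> f) a" and H2: "\<exists>p\<in>hom C A A. a = add (st f \<cdot> bi \<cdot> f) p \<and> invertible C p"
      using H herm_less_char[OF c a] by blast+
    obtain p where p: "p \<in> hom C A A" "a = add (st f \<cdot> bi \<cdot> f) p" "invertible C p" using H2 by blast
    obtain pi where pi: "pi \<in> hom C A A" "pi \<cdot> p = Idm C A" "p \<cdot> pi = Idm C A" by (rule invertible_D[OF p(1) p(3)])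
    have "\<exists>e\<in>hom C B B. b = add (f \<cdot> ai \<cdot> st f) e \<and> invertible C e"
      by (rule dir_less[OF AO BO f a b sa sb ai bi p(1) p(2) pi(1) pi(3) pi(2)])
    then show ?thesis using herm_less_char[OF d b] le[OF H1] by blast
  qed
qed

end

theorem proposition6p2:
  fixes C :: "('o, 'm) starcat" and A B :: 'o and f a b :: 'm
  assumes "pre_hilbert C"
    and "A \<in> Ob C" and "B \<in> Ob C"
    and "f \<in> hom C A B" and "a \<in> hom C A A" and "b \<in> hom C B B"
    and "herm_less C (zero_mor C A A) a"
    and "herm_less C (zero_mor C B B) b"
  shows "(herm_le C (Cmp C (Star C f) (Cmp C (inverse_mor C b) f)) a \<longleftrightarrow>
          herm_le C (Cmp C f (Cmp C (inverse_mor C a) (Star C f))) b) \<and>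
         (herm_less C (Cmp C (Star C f) (Cmp C (inverse_mor C b) f)) a \<longleftrightarrow>
          herm_less C (Cmp C f (Cmp C (inverse_mor C a) (Star C f))) b)"
proof -
  interpret PH C by unfold_locales (rule assms(1))
  note AO = assms(2) and BO = assms(3) and f = assms(4) and a = assms(5) and b = assms(6)
  obtain Wa wa where pa: "Star C a = a" "Wa \<in> Ob C" "wa \<in> hom C A Wa" "Cmp C (Star C wa) wa = a"
    "inverse_mor C a \<in> hom C A A" "Cmp C a (inverse_mor C a) = Idm C A" "Cmp C (inverse_mor C a) a = Idm C A"
    by (rule pos_D[OF a assms(7)])
  obtain Wb wb where pb: "Star C b = b" "Wb \<in> Ob C" "wb \<in> hom C B Wb" "Cmp C (Star C wb) wb = b"
    "inverse_mor C b \<in> hom C B B" "Cmp C b (inverse_mor C b) = Idm C B" "Cmp C (inverse_mor C b) b = Idm C B"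
    by (rule pos_D[OF b assms(8)])
  have sf: "Star C f \<in> hom C B A" using f by (simp add: hom_iff)
  have ssf: "Star C (Star C f) = f" using f by (simp add: hom_iff)
  note d1 = one_dir[OF AO BO f a b pa(1) pb(1) pa(5) pa(6) pa(7) pb(5) pb(6) pb(7) pb(2) pb(3) pb(4)]
  note d2 = one_dir[OF BO AO sf b a pb(1) pa(1) pb(5) pb(6) pb(7) pa(5) pa(6) pa(7) pa(2) pa(3) pa(4), unfolded ssf]
  show ?thesis using d1 d2 by blast
qed



end
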